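(* Let $\varphi_1,\varphi_2\in L^2(\mathbb{R}^3)$ be orthonormal, and for each $N\ge2$ let $N_1=N_1(N),N_2=N_2(N)\in\mathbb{N}$ with $N_1+N_2=N$ and $N_1/N\to n_1\in(0,1)$, $N_2/N\to n_2\in(0,1)$. Let $\gamma_N^{(k)}$ and $\widetilde\gamma_N^{(k)}$ be the $k$-body marginals of $\gamma_N:=|\varphi_1^{\otimes N_1}\vee\varphi_2^{\otimes N_2}\rangle\langle\varphi_1^{\otimes N_1}\vee\varphi_2^{\otimes N_2}|$ and of $\widetilde\gamma_N:=(2\pi)^{-2}\iint_{[0,2\pi]^2}|(\psi^{\theta_1,\theta_2})^{\otimes N}\rangle\langle(\psi^{\theta_1,\theta_2})^{\otimes N}|\,\mathrm{d}\theta_1\mathrm{d}\theta_2$, where $\psi^{\theta_1,\theta_2}:=\sqrt{N_1/N}\,e^{-\mathrm{i}\theta_1}\varphi_1+\sqrt{N_2/N}\,e^{-\mathrm{i}\theta_2}\varphi_2$. Then for each $k\in\mathbb{N}$ there exists $c_k\ge0$, independent of $N$, such that for all $N\ge 2$ with $N\ge k$, $$\mathrm{Tr}\big|\gamma_N^{(k)}-\widetilde\gamma_N^{(k)}\big|\le\frac{c_k}{N},$$ and moreover $c_1=0$ (i.e. $\gamma_N^{(1)}=\widetilde\gamma_N^{(1)}$).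
   Context: $\vee$ denotes the normalised symmetric tensor product (unit vector obtained by normalising the sum of all distinct arrangements of the factors). The $k$-body marginal of a density matrix $\gamma$ on $L^2_{\mathrm{sym}}(\mathbb{R}^{3N})$ is the partial trace over $N-k$ particles, with kernel $\int\gamma(x_1..x_k,Z;y_1..y_k,Z)\,\mathrm{d}Z$; $\gamma^{(N)}=\gamma$. $\mathrm{Tr}|\cdot|$ is the trace norm on $L^2_{\mathrm{sym}}(\mathbb{R}^{3k})$. *)

theory Defs
  imports "HOL-Analysis.Analysis"
begin

text \<open>Configurations of particles in R^3: a point of R^(3n) is a map
  nat => real^3, only the coordinates below n being relevant.\<close>
type_synonym cfg = "nat \<Rightarrow> real^3"

definition conf :: "nat \<Rightarrow> cfg measure" where
  "conf n = PiM {..<n} (\<lambda>_. (lborel :: (real^3) measure))"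

definition L2 :: "'a measure \<Rightarrow> ('a \<Rightarrow> complex) set" where
  "L2 M = {f. f \<in> borel_measurable M \<and> integrable M (\<lambda>x. (cmod (f x))^2)}"

definition inner_L2 :: "'a measure \<Rightarrow> ('a \<Rightarrow> complex) \<Rightarrow> ('a \<Rightarrow> complex) \<Rightarrow> complex" where
  "inner_L2 M f g = integral\<^sup>L M (\<lambda>x. cnj (f x) * g x)"

definition norm_L2 :: "'a measure \<Rightarrow> ('a \<Rightarrow> complex) \<Rightarrow> real" where
  "norm_L2 M f = sqrt (integral\<^sup>L M (\<lambda>x. (cmod (f x))^2))"

definition orthonormal_fam :: "'a measure \<Rightarrow> nat \<Rightarrow> (nat \<Rightarrow> 'a \<Rightarrow> complex) \<Rightarrow> bool" where
  "orthonormal_fam M m es \<longleftrightarrow>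
     (\<forall>i<m. \<forall>j<m. inner_L2 M (es i) (es j) = (if i = j then 1 else 0))"

definition tensor :: "(nat \<Rightarrow> (real^3 \<Rightarrow> complex)) \<Rightarrow> nat \<Rightarrow> cfg \<Rightarrow> complex" where
  "tensor fs n x = (\<Prod>i<n. fs i (x i))"

definition arrangements :: "(nat \<Rightarrow> (real^3 \<Rightarrow> complex)) \<Rightarrow> nat \<Rightarrow> (nat \<Rightarrow> (real^3 \<Rightarrow> complex)) set" where
  "arrangements fs n =
     {(\<lambda>i. if i < n then fs (\<sigma> i) else undefined) | \<sigma>. \<sigma> permutes {..<n}}"

definition symsum :: "(nat \<Rightarrow> (real^3 \<Rightarrow> complex)) \<Rightarrow> nat \<Rightarrow> cfg \<Rightarrow> complex" where
  "symsum fs n x = (\<Sum>g\<in>arrangements fs n. tensor g n x)"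

definition symprod :: "(nat \<Rightarrow> (real^3 \<Rightarrow> complex)) \<Rightarrow> nat \<Rightarrow> cfg \<Rightarrow> complex" where
  "symprod fs n x = symsum fs n x / complex_of_real (norm_L2 (conf n) (symsum fs n))"

definition vee2 :: "(real^3 \<Rightarrow> complex) \<Rightarrow> nat \<Rightarrow> (real^3 \<Rightarrow> complex) \<Rightarrow> nat \<Rightarrow> cfg \<Rightarrow> complex" where
  "vee2 \<phi>1 N1 \<phi>2 N2 = symprod (\<lambda>i. if i < N1 then \<phi>1 else \<phi>2) (N1 + N2)"

definition proj_kernel :: "(cfg \<Rightarrow> complex) \<Rightarrow> cfg \<Rightarrow> cfg \<Rightarrow> complex" where
  "proj_kernel \<Psi> x y = \<Psi> x * cnj (\<Psi> y)"

definition join :: "nat \<Rightarrow> nat \<Rightarrow> cfg \<Rightarrow> cfg \<Rightarrow> cfg" where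
  "join k n x z = (\<lambda>i. if i < k then x i else if i < k + n then z (i - k) else undefined)"

definition marginal :: "nat \<Rightarrow> nat \<Rightarrow> (cfg \<Rightarrow> cfg \<Rightarrow> complex) \<Rightarrow> cfg \<Rightarrow> cfg \<Rightarrow> complex" where
  "marginal N k K x y =
     integral\<^sup>L (conf (N - k)) (\<lambda>z. K (join k (N - k) x z) (join k (N - k) y z))"

definition psi_theta :: "(real^3 \<Rightarrow> complex) \<Rightarrow> nat \<Rightarrow> (real^3 \<Rightarrow> complex) \<Rightarrow> nat \<Rightarrow> nat
    \<Rightarrow> real \<Rightarrow> real \<Rightarrow> real^3 \<Rightarrow> complex" where
  "psi_theta \<phi>1 N1 \<phi>2 N2 N t1 t2 z =
     complex_of_real (sqrt (real N1 / real N)) * exp (- \<i> * complex_of_real t1) * \<phi>1 z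
   + complex_of_real (sqrt (real N2 / real N)) * exp (- \<i> * complex_of_real t2) * \<phi>2 z"

definition mixed_kernel :: "(real^3 \<Rightarrow> complex) \<Rightarrow> nat \<Rightarrow> (real^3 \<Rightarrow> complex) \<Rightarrow> nat \<Rightarrow> nat
    \<Rightarrow> cfg \<Rightarrow> cfg \<Rightarrow> complex" where
  "mixed_kernel \<phi>1 N1 \<phi>2 N2 N x y =
     complex_of_real (1 / (2 * pi)^2) *
     (LINT t1:{0..2*pi}|lborel. LINT t2:{0..2*pi}|lborel.
        proj_kernel (tensor (\<lambda>_. psi_theta \<phi>1 N1 \<phi>2 N2 N t1 t2) N) x y)"

definition apply_kernel :: "'a measure \<Rightarrow> ('a \<Rightarrow> 'a \<Rightarrow> complex) \<Rightarrow> ('a \<Rightarrow> complex) \<Rightarrow> 'a \<Rightarrow> complex" where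
  "apply_kernel M K f x = integral\<^sup>L M (\<lambda>y. K x y * f y)"

definition sym_fun :: "nat \<Rightarrow> (cfg \<Rightarrow> complex) \<Rightarrow> bool" where
  "sym_fun k f \<longleftrightarrow> (\<forall>\<sigma> x. \<sigma> permutes {..<k} \<longrightarrow> f (x \<circ> \<sigma>) = f x)"

definition L2sym :: "nat \<Rightarrow> (cfg \<Rightarrow> complex) set" where
  "L2sym k = {f \<in> L2 (conf k). sym_fun k f}"

text \<open>Trace norm on L^2_sym(R^(3k)) of the operator with kernel K:
  Tr|A| = sup of sum_i |<e_i, A f_i>| over finite orthonormal families
  (e_i), (f_i) (value infinity if A is not trace class).\<close>
definition trace_norm :: "nat \<Rightarrow> (cfg \<Rightarrow> cfg \<Rightarrow> complex) \<Rightarrow> ennreal" where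
  "trace_norm k K = Sup {ennreal (\<Sum>i<m. cmod (inner_L2 (conf k) (es i) (apply_kernel (conf k) K (fs i))))
      | m es fs. (\<forall>i<m. es i \<in> L2sym k \<and> fs i \<in> L2sym k)
          \<and> orthonormal_fam (conf k) m es \<and> orthonormal_fam (conf k) m fs}"

end

theory Submission
  imports Defs "HOL-Analysis.Analysis"
begin


lemma borel_measurable_cnj' [measurable (raw)]:
  fixes f :: "'a \<Rightarrow> complex"
  assumes "f \<in> borel_measurable M"
  shows "(\<lambda>x. cnj (f x)) \<in> borel_measurable M"
  by (rule borel_measurable_continuous_on[OF _ assms]) (intro continuous_intros)

lemma L2_cnj_mult_integrable:
  fixes f g :: "'a \<Rightarrow> complex"
  assumes "f \<in> L2 M" "g \<in> L2 M"
  shows "integrable M (\<lambda>x. cnj (f x) * g x)"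
proof (rule Bochner_Integration.integrable_bound)
  show "integrable M (\<lambda>x. (cmod (f x))^2 + (cmod (g x))^2)"
    using assms by (auto simp: L2_def)
  have "f \<in> borel_measurable M" "g \<in> borel_measurable M" using assms by (auto simp: L2_def)
  then show "(\<lambda>x. cnj (f x) * g x) \<in> borel_measurable M"
    by measurable
  show "AE x in M. norm (cnj (f x) * g x) \<le> norm ((cmod (f x))^2 + (cmod (g x))^2)"
  proof (rule AE_I2)
    fix x
    have "cmod (f x) * cmod (g x) \<le> (cmod (f x))^2 + (cmod (g x))^2"
      by (smt (verit, best) norm_ge_zero power2_eq_square mult_mono sum_squares_bound)
    then show "norm (cnj (f x) * g x) \<le> norm ((cmod (f x))^2 + (cmod (g x))^2)"
      by (simp add: norm_mult)
  qed
qed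

interpretation lb3: product_sigma_finite "\<lambda>_::nat. (lborel :: (real^3) measure)"
  by unfold_locales

lemma conf_prod_integrable:
  fixes f :: "nat \<Rightarrow> real^3 \<Rightarrow> 'b::{real_normed_field,banach,second_countable_topology}"
  assumes "\<And>i. i < n \<Longrightarrow> integrable lborel (f i)"
  shows "integrable (conf n) (\<lambda>x. \<Prod>i<n. f i (x i))"
  unfolding conf_def by (rule lb3.product_integrable_prod) (use assms in auto)

lemma conf_prod_integral:
  fixes f :: "nat \<Rightarrow> real^3 \<Rightarrow> 'b::{real_normed_field,banach,second_countable_topology}"
  assumes "\<And>i. i < n \<Longrightarrow> integrable lborel (f i)"
  shows "integral\<^sup>L (conf n) (\<lambda>x. \<Prod>i<n. f i (x i)) = (\<Prod>i<n. integral\<^sup>L lborel (f i))"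
  unfolding conf_def by (rule lb3.product_integral_prod) (use assms in auto)

lemma tensor_measurable:
  assumes "\<And>i. i < n \<Longrightarrow> g i \<in> borel_measurable lborel"
  shows "tensor g n \<in> borel_measurable (conf n)"
  unfolding tensor_def conf_def
  by (rule borel_measurable_prod) (auto intro!: measurable_compose[OF measurable_component_singleton] assms)

lemma inner_L2_swap: "inner_L2 M g f = cnj (inner_L2 M f g)"
  unfolding inner_L2_def using Bochner_Integration.integral_cnj[of M "\<lambda>x. cnj (f x) * g x"] by (simp add: mult.commute)

locale two_orth =
  fixes a b :: "real^3 \<Rightarrow> complex"
  assumes aL2: "a \<in> L2 lborel" and bL2: "b \<in> L2 lborel"
    and aa: "inner_L2 lborel a a = 1" and bb: "inner_L2 lborel b b = 1"
    and ab: "inner_L2 lborel a b = 0"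
begin

lemma ba: "inner_L2 lborel b a = 0"
  using ab by (simp add: inner_L2_swap[of _ b a])

lemma a_ne_b: "a \<noteq> b"
  using aa ab by auto

definition G :: "nat \<Rightarrow> (nat \<Rightarrow> real^3 \<Rightarrow> complex) set" where
  "G n = PiE {..<n} (\<lambda>_. {a, b})"

lemma finite_G[simp]: "finite (G n)"
  unfolding G_def by (intro finite_PiE) auto

lemma ab_L2: "u \<in> {a,b} \<Longrightarrow> u \<in> L2 lborel"
  using aL2 bL2 by auto

lemma ab_meas: "u \<in> {a,b} \<Longrightarrow> u \<in> borel_measurable lborel"
  using ab_L2 by (auto simp: L2_def)

lemma ab_inner: "u \<in> {a,b} \<Longrightarrow> v \<in> {a,b} \<Longrightarrow> inner_L2 lborel u v = (if u = v then 1 else 0)"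
  using aa bb ab ba by auto

lemma ab_int: "u \<in> {a,b} \<Longrightarrow> v \<in> {a,b} \<Longrightarrow> integrable lborel (\<lambda>x. cnj (u x) * v x)"
  using ab_L2 L2_cnj_mult_integrable by blast

lemma ab_int': "u \<in> {a,b} \<Longrightarrow> v \<in> {a,b} \<Longrightarrow> integrable lborel (\<lambda>x. u x * cnj (v x))"
  using ab_int[of v u] by (simp add: mult.commute)

lemma ab_inner': "u \<in> {a,b} \<Longrightarrow> v \<in> {a,b} \<Longrightarrow>
   integral\<^sup>L lborel (\<lambda>x. u x * cnj (v x)) = (if u = v then 1 else 0)"
  using ab_inner[of v u] by (auto simp: inner_L2_def mult.commute)

lemma G_vals: "g \<in> G n \<Longrightarrow> i < n \<Longrightarrow> g i \<in> {a,b}"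
  unfolding G_def by auto

lemma tensor_meas: "g \<in> G n \<Longrightarrow> tensor g n \<in> borel_measurable (conf n)"
  by (rule tensor_measurable) (metis ab_meas G_vals measurable_lborel1)

lemma G_neq: "g \<in> G n \<Longrightarrow> g' \<in> G n \<Longrightarrow> g \<noteq> g' \<Longrightarrow> \<exists>i<n. g i \<noteq> g' i"
  unfolding G_def by (metis PiE_ext lessThan_iff)

lemma tensor_orth:
  assumes "g \<in> G n" "g' \<in> G n"
  shows "integrable (conf n) (\<lambda>z. tensor g n z * cnj (tensor g' n z))"
    and "integral\<^sup>L (conf n) (\<lambda>z. tensor g n z * cnj (tensor g' n z)) = (if g = g' then 1 else 0)"
proof -
  have eq: "(\<lambda>z. tensor g n z * cnj (tensor g' n z)) = (\<lambda>z. \<Prod>i<n. g i (z i) * cnj (g' i (z i)))"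
    by (auto simp: tensor_def prod.distrib)
  show "integrable (conf n) (\<lambda>z. tensor g n z * cnj (tensor g' n z))"
    unfolding eq by (rule conf_prod_integrable) (use ab_int'[OF G_vals[OF assms(1)] G_vals[OF assms(2)]] in auto)
  have "integral\<^sup>L (conf n) (\<lambda>z. tensor g n z * cnj (tensor g' n z)) =
     (\<Prod>i<n. integral\<^sup>L lborel (\<lambda>x. g i x * cnj (g' i x)))"
    unfolding eq by (rule conf_prod_integral) (use ab_int'[OF G_vals[OF assms(1)] G_vals[OF assms(2)]] in auto)
  also have "\<dots> = (\<Prod>i<n. if g i = g' i then 1 else 0)"
  proof (rule prod.cong[OF refl])
    fix i assume "i \<in> {..<n}"
    then show "integral\<^sup>L lborel (\<lambda>x. g i x * cnj (g' i x)) = (if g i = g' i then 1 else 0)"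
      using ab_inner'[OF G_vals[OF assms(1)] G_vals[OF assms(2)]] by auto
  qed
  also have "\<dots> = (if g = g' then 1 else 0)"
    using G_neq[OF assms] by auto
  finally show "integral\<^sup>L (conf n) (\<lambda>z. tensor g n z * cnj (tensor g' n z)) = (if g = g' then 1 else 0)" .
qed

lemma tensor_L2: "g \<in> G n \<Longrightarrow> tensor g n \<in> L2 (conf n)"
  unfolding L2_def
proof (intro CollectI conjI tensor_meas)
  assume g: "g \<in> G n"
  have "integrable (conf n) (\<lambda>z. Re (tensor g n z * cnj (tensor g n z)))"
    using tensor_orth(1)[OF g g] by (rule integrable_Re)
  moreover have "\<And>z. Re (tensor g n z * cnj (tensor g n z)) = (cmod (tensor g n z))^2"
    by (metis Re_complex_of_real complex_norm_square)
  ultimately show "integrable (conf n) (\<lambda>x. (cmod (tensor g n x))\<^sup>2)" by simp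
qed

lemma tensor_inner: "g \<in> G n \<Longrightarrow> g' \<in> G n \<Longrightarrow> inner_L2 (conf n) (tensor g n) (tensor g' n) = (if g = g' then 1 else 0)"
  using tensor_orth(2)[of g' n g] by (auto simp: inner_L2_def mult.commute)

end


definition catf :: "nat \<Rightarrow> nat \<Rightarrow> (nat \<Rightarrow> 'a) \<Rightarrow> (nat \<Rightarrow> 'a) \<Rightarrow> nat \<Rightarrow> 'a" where
  "catf k m h t = (\<lambda>i. if i < k then h i else if i < k + m then t (i - k) else undefined)"

lemma join_catf: "join k m = catf k m"
  unfolding join_def catf_def by (intro ext) simp

lemma tensor_cong: "(\<And>i. i < n \<Longrightarrow> g i (x i) = g' i (x' i)) \<Longrightarrow> tensor g n x = tensor g' n x'"
  unfolding tensor_def by (intro prod.cong) auto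

lemma tensor_catf: "tensor (catf k m h t) (k + m) (catf k m x z) = tensor h k x * tensor t m z"
proof -
  have "tensor (catf k m h t) (k + m) (catf k m x z) = (\<Prod>i\<in>{..<k} \<union> {k..<k+m}. catf k m h t i (catf k m x z i))"
    unfolding tensor_def by (intro prod.cong) auto
  also have "\<dots> = (\<Prod>i<k. h i (x i)) * (\<Prod>i\<in>{k..<k+m}. t (i - k) (z (i - k)))"
    by (subst prod.union_disjoint) (auto simp: catf_def intro!: prod.cong)
  also have "(\<Prod>i\<in>{k..<k+m}. t (i - k) (z (i - k))) = (\<Prod>i<m. t i (z i))"
  proof -
    have "(\<Prod>i\<in>{k..<k+m}. t (i - k) (z (i - k))) = (\<Prod>i\<in>(\<lambda>j. j + k) ` {..<m}. t (i - k) (z (i - k)))"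
    proof (intro prod.cong refl)
      have "x \<in> (\<lambda>j. j + k) ` {..<m}" if "k \<le> x" "x < k + m" for x
        using that by (intro image_eqI[of _ _ "x - k"]) auto
      then show "{k..<k + m} = (\<lambda>j. j + k) ` {..<m}" by auto
    qed
    also have "\<dots> = (\<Prod>i<m. t i (z i))"
      by (subst prod.reindex) (auto simp: inj_on_def)
    finally show ?thesis .
  qed
  finally show ?thesis by (simp add: tensor_def)
qed

context two_orth
begin

definition ones :: "nat \<Rightarrow> (nat \<Rightarrow> real^3 \<Rightarrow> complex) \<Rightarrow> nat" where
  "ones n g = card {i. i < n \<and> g i = a}"

lemma ones_le: "ones n g \<le> n"
proof -
  have "ones n g \<le> card {..<n}" unfolding ones_def by (intro card_mono) auto
  then show ?thesis by simp
qed

lemma catf_G: "h \<in> G k \<Longrightarrow> t \<in> G m \<Longrightarrow> catf k m h t \<in> G (k + m)"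
  unfolding G_def catf_def by (auto simp: PiE_def extensional_def Pi_def)

lemma bij_catf: "bij_betw (\<lambda>(h, t). catf k m h t) (G k \<times> G m) (G (k + m))"
proof (rule bij_betwI[where g = "\<lambda>g. (\<lambda>i. if i < k then g i else undefined, \<lambda>i. if i < m then g (k + i) else undefined)"])
  show "(\<lambda>(h, t). catf k m h t) \<in> G k \<times> G m \<rightarrow> G (k + m)"
    using catf_G by auto
  show "(\<lambda>g. (\<lambda>i. if i < k then g i else undefined, \<lambda>i. if i < m then g (k + i) else undefined)) \<in> G (k + m) \<rightarrow> G k \<times> G m"
    unfolding G_def by (auto simp: PiE_def extensional_def Pi_def)
  show "(\<lambda>i. if i < k then (case x of (h, t) \<Rightarrow> catf k m h t) i else undefined,
          \<lambda>i. if i < m then (case x of (h, t) \<Rightarrow> catf k m h t) (k + i) else undefined) = x"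
    if "x \<in> G k \<times> G m" for x
    using that unfolding G_def catf_def by (auto simp: PiE_def extensional_def fun_eq_iff)
  show "(case (\<lambda>i. if i < k then y i else undefined, \<lambda>i. if i < m then y (k + i) else undefined) of
         (h, t) \<Rightarrow> catf k m h t) = y" if "y \<in> G (k + m)" for y
    using that unfolding G_def catf_def by (auto simp: PiE_def extensional_def fun_eq_iff)
qed

lemma sum_G_split:
  "(\<Sum>g\<in>G (k + m). F g) = (\<Sum>h\<in>G k. \<Sum>t\<in>G m. F (catf k m h t))"
proof -
  have "(\<Sum>g\<in>G (k + m). F g) = (\<Sum>p\<in>G k \<times> G m. F (case p of (h, t) \<Rightarrow> catf k m h t))"
    using sum.reindex_bij_betw[OF bij_catf, of F] by simp
  also have "\<dots> = (\<Sum>h\<in>G k. \<Sum>t\<in>G m. F (catf k m h t))"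
    unfolding sum.cartesian_product by (rule sum.cong) auto
  finally show ?thesis .
qed

lemma ones_catf: "ones (k + m) (catf k m h t) = ones k h + ones m t"
proof -
  have "{i. i < k + m \<and> catf k m h t i = a} = {i. i < k \<and> h i = a} \<union> (\<lambda>j. j + k) ` {j. j < m \<and> t j = a}"
  proof (rule set_eqI)
    fix i
    show "i \<in> {i. i < k + m \<and> catf k m h t i = a} \<longleftrightarrow> i \<in> {i. i < k \<and> h i = a} \<union> (\<lambda>j. j + k) ` {j. j < m \<and> t j = a}"
    proof (cases "i < k")
      case True then show ?thesis by (auto simp: catf_def)
    next
      case False
      have "i \<in> (\<lambda>j. j + k) ` {j. j < m \<and> t j = a} \<longleftrightarrow> i - k < m \<and> t (i - k) = a"
      proof
        assume "i - k < m \<and> t (i - k) = a"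
        then show "i \<in> (\<lambda>j. j + k) ` {j. j < m \<and> t j = a}"
          using False by (intro image_eqI[of _ _ "i - k"]) auto
      qed auto
      moreover have "catf k m h t i = (if i < k + m then t (i - k) else undefined)"
        using False by (simp add: catf_def)
      moreover have "i < k + m \<longleftrightarrow> i - k < m" using False by arith
      ultimately show ?thesis using False by simp
    qed
  qed
  then have "ones (k + m) (catf k m h t) = card ({i. i < k \<and> h i = a} \<union> (\<lambda>j. j + k) ` {j. j < m \<and> t j = a})"
    by (simp add: ones_def)
  also have "\<dots> = ones k h + card ((\<lambda>j. j + k) ` {j. j < m \<and> t j = a})"
    by (subst card_Un_disjoint) (auto simp: ones_def)
  also have "card ((\<lambda>j. j + k) ` {j. j < m \<and> t j = a}) = ones m t"
    by (subst card_image) (auto simp: ones_def inj_on_def)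
  finally show ?thesis .
qed

lemma count_ones: "card {t \<in> G m. ones m t = r} = m choose r"
proof -
  have "bij_betw (\<lambda>t. {i. i < m \<and> t i = a}) {t \<in> G m. ones m t = r} {B. B \<subseteq> {..<m} \<and> card B = r}"
  proof (rule bij_betwI[where g = "\<lambda>B i. if i < m then (if i \<in> B then a else b) else undefined"])
    show "(\<lambda>t. {i. i < m \<and> t i = a}) \<in> {t \<in> G m. ones m t = r} \<rightarrow> {B. B \<subseteq> {..<m} \<and> card B = r}"
      by (auto simp: ones_def)
    show "(\<lambda>B i. if i < m then if i \<in> B then a else b else undefined) \<in> {B. B \<subseteq> {..<m} \<and> card B = r} \<rightarrow> {t \<in> G m. ones m t = r}"
    proof
      fix B assume B: "B \<in> {B. B \<subseteq> {..<m} \<and> card B = r}"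
      have "{i. i < m \<and> (if i < m then if i \<in> B then a else b else undefined) = a} = B"
        using B a_ne_b by auto
      then show "(\<lambda>i. if i < m then if i \<in> B then a else b else undefined) \<in> {t \<in> G m. ones m t = r}"
        using B by (auto simp: G_def ones_def)
    qed
    show "(\<lambda>i. if i < m then if i \<in> {i. i < m \<and> x i = a} then a else b else undefined) = x"
      if "x \<in> {t \<in> G m. ones m t = r}" for x
      using that unfolding G_def by (auto simp: PiE_def extensional_def fun_eq_iff)
    show "{i. i < m \<and> (if i < m then if i \<in> y then a else b else undefined) = a} = y"
      if "y \<in> {B. B \<subseteq> {..<m} \<and> card B = r}" for y
      using that a_ne_b by auto
  qed
  then have "card {t \<in> G m. ones m t = r} = card {B. B \<subseteq> {..<m} \<and> card B = r}"
    by (rule bij_betw_same_card)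
  also have "\<dots> = m choose r" by (simp add: n_subsets)
  finally show ?thesis .
qed

end

context two_orth begin

lemma marginal_sum:
  assumes "k \<le> N"
  shows "marginal N k (\<lambda>x y. \<Sum>g\<in>G N. \<Sum>g'\<in>G N. c g g' * (tensor g N x * cnj (tensor g' N y))) x y
   = (\<Sum>h\<in>G k. \<Sum>h'\<in>G k. (\<Sum>t\<in>G (N - k). c (catf k (N - k) h t) (catf k (N - k) h' t)) * (tensor h k x * cnj (tensor h' k y)))"
proof -
  define m where "m = N - k"
  have N: "N = k + m" using assms by (simp add: m_def)
  define X where "X h h' = tensor h k x * cnj (tensor h' k y)" for h h'
  define C where "C h t h' t' = c (catf k m h t) (catf k m h' t')" for h t h' t'
  have F: "(\<Sum>g\<in>G N. \<Sum>g'\<in>G N. c g g' * (tensor g N (catf k m x z) * cnj (tensor g' N (catf k m y z))))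
     = (\<Sum>h\<in>G k. \<Sum>t\<in>G m. \<Sum>h'\<in>G k. \<Sum>t'\<in>G m. C h t h' t' * X h h' * (tensor t m z * cnj (tensor t' m z)))" for z
    unfolding N sum_G_split tensor_catf C_def X_def
    by (intro sum.cong refl) (simp add: mult_ac)
  have I: "integral\<^sup>L (conf m) (\<lambda>z. \<Sum>h\<in>G k. \<Sum>t\<in>G m. \<Sum>h'\<in>G k. \<Sum>t'\<in>G m. C h t h' t' * X h h' * (tensor t m z * cnj (tensor t' m z)))
     = (\<Sum>h\<in>G k. \<Sum>t\<in>G m. \<Sum>h'\<in>G k. \<Sum>t'\<in>G m. C h t h' t' * X h h' * (if t = t' then 1 else 0))"
    by (simp add: integral_sum integrable_sum tensor_orth)
  have J: "(\<Sum>t'\<in>G m. C h t h' t' * X h h' * (if t = t' then 1 else 0)) = C h t h' t * X h h'" if "t \<in> G m" for h t h'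
    using that by (simp add: if_distrib[of "\<lambda>u. _ * u"] sum.delta cong: if_cong)
  have "marginal N k (\<lambda>x y. \<Sum>g\<in>G N. \<Sum>g'\<in>G N. c g g' * (tensor g N x * cnj (tensor g' N y))) x y
     = (\<Sum>h\<in>G k. \<Sum>t\<in>G m. \<Sum>h'\<in>G k. C h t h' t * X h h')"
    unfolding marginal_def m_def[symmetric] join_catf F I by (simp add: J)
  also have "\<dots> = (\<Sum>h\<in>G k. \<Sum>h'\<in>G k. (\<Sum>t\<in>G m. C h t h' t) * X h h')"
    by (simp add: sum.swap[of _ "G m"] sum_distrib_right)
  finally show ?thesis by (simp add: C_def X_def m_def)
qed

end

context two_orth begin

definition fsab :: "nat \<Rightarrow> nat \<Rightarrow> real^3 \<Rightarrow> complex" where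
  "fsab N1 = (\<lambda>i. if i < N1 then a else b)"

lemma arrangements_eq:
  assumes "N1 \<le> N"
  shows "arrangements (fsab N1) N = {g \<in> G N. ones N g = N1}"
proof (intro set_eqI iffI)
  fix g assume "g \<in> arrangements (fsab N1) N"
  then obtain \<sigma> where s: "\<sigma> permutes {..<N}" and g: "g = (\<lambda>i. if i < N then fsab N1 (\<sigma> i) else undefined)"
    unfolding arrangements_def by auto
  have "g \<in> G N" unfolding g G_def fsab_def by (auto simp: PiE_def extensional_def)
  moreover have "ones N g = N1"
  proof -
    have "{i. i < N \<and> g i = a} = {i. i < N \<and> \<sigma> i < N1}"
      using a_ne_b by (auto simp: g fsab_def)
    moreover have "\<sigma> ` {i. i < N \<and> \<sigma> i < N1} = {..<N1}"
    proof -
      have "\<sigma> ` {i. i < N \<and> \<sigma> i < N1} \<subseteq> {..<N1}" by auto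
      moreover have "j \<in> \<sigma> ` {i. i < N \<and> \<sigma> i < N1}" if "j < N1" for j
      proof -
        have "j \<in> {..<N}" using that assms by auto
        then have "j \<in> \<sigma> ` {..<N}" using permutes_image[OF s] by simp
        then obtain i where "i \<in> {..<N}" "\<sigma> i = j" by blast
        then show ?thesis using that by auto
      qed
      ultimately show ?thesis by auto
    qed
    moreover have "inj_on \<sigma> {i. i < N \<and> \<sigma> i < N1}"
      using permutes_inj[OF s] by (auto intro: inj_on_subset)
    ultimately show ?thesis unfolding ones_def
      by (metis card_image card_lessThan)
  qed
  ultimately show "g \<in> {g \<in> G N. ones N g = N1}" by auto
next
  fix g assume "g \<in> {g \<in> G N. ones N g = N1}"
  then have gG: "g \<in> G N" and go: "ones N g = N1" by auto
  define P where "P = {i. i < N \<and> g i = a}"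
  define Q where "Q = {i. i < N \<and> g i \<noteq> a}"
  have cP: "card P = N1" using go by (simp add: ones_def P_def)
  have PQ: "P \<union> Q = {..<N}" "P \<inter> Q = {}" by (auto simp: P_def Q_def)
  have "card Q = N - N1"
  proof -
    have "card P + card Q = N" using PQ card_Un_disjoint[of P Q]
      by (metis card_lessThan finite_Un finite_lessThan)
    then show ?thesis using cP by simp
  qed
  then have cQ: "card Q = card {N1..<N}" by simp
  obtain f1 where f1: "bij_betw f1 P {..<N1}"
    using finite_same_card_bij[of P "{..<N1}"] cP by (auto simp: P_def)
  obtain f2 where f2: "bij_betw f2 Q {N1..<N}"
    using finite_same_card_bij[of Q "{N1..<N}"] cQ by (auto simp: Q_def)
  define \<sigma> where "\<sigma> i = (if i \<in> P then f1 i else if i \<in> Q then f2 i else i)" for i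
  have b1: "bij_betw \<sigma> P {..<N1}"
    using f1 by (rule bij_betw_cong[THEN iffD1, rotated]) (auto simp: \<sigma>_def)
  have b2: "bij_betw \<sigma> Q {N1..<N}"
    using f2 by (rule bij_betw_cong[THEN iffD1, rotated]) (use PQ in \<open>auto simp: \<sigma>_def\<close>)
  have "bij_betw \<sigma> (P \<union> Q) ({..<N1} \<union> {N1..<N})"
    by (rule bij_betw_combine[OF b1 b2]) auto
  moreover have "{..<N1} \<union> {N1..<N} = {..<N}" using assms by auto
  ultimately have "bij_betw \<sigma> {..<N} {..<N}" using PQ by simp
  then have s: "\<sigma> permutes {..<N}"
    by (rule bij_imp_permutes) (use PQ in \<open>auto simp: \<sigma>_def\<close>)
  have "g = (\<lambda>i. if i < N then fsab N1 (\<sigma> i) else undefined)"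
  proof
    fix i
    show "g i = (if i < N then fsab N1 (\<sigma> i) else undefined)"
    proof (cases "i < N")
      case False then show ?thesis using gG by (auto simp: G_def PiE_def extensional_def)
    next
      case True
      show ?thesis
      proof (cases "i \<in> P")
        case True
        then have "\<sigma> i < N1" using b1 by (auto simp: bij_betw_def)
        then show ?thesis using True by (auto simp: fsab_def P_def)
      next
        case False
        then have iQ: "i \<in> Q" using \<open>i < N\<close> by (auto simp: P_def Q_def)
        then have "\<sigma> i \<ge> N1" using b2 by (auto simp: bij_betw_def)
        moreover have "g i = b" using iQ G_vals[OF gG, of i] by (auto simp: Q_def)
        ultimately show ?thesis using \<open>i < N\<close> by (auto simp: fsab_def)
      qed
    qed
  qed
  then show "g \<in> arrangements (fsab N1) N"
    unfolding arrangements_def using s by blast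
qed

lemma symsum_eq:
  assumes "N1 \<le> N"
  shows "symsum (fsab N1) N x = (\<Sum>g\<in>{g \<in> G N. ones N g = N1}. tensor g N x)"
  unfolding symsum_def arrangements_eq[OF assms] ..

lemma integral_double_sum:
  fixes f :: "'i \<Rightarrow> 'j \<Rightarrow> 'a \<Rightarrow> complex"
  assumes "finite A" "finite B" "\<And>i j. i \<in> A \<Longrightarrow> j \<in> B \<Longrightarrow> integrable M (f i j)"
  shows "integral\<^sup>L M (\<lambda>z. \<Sum>i\<in>A. \<Sum>j\<in>B. f i j z) = (\<Sum>i\<in>A. \<Sum>j\<in>B. integral\<^sup>L M (f i j))"
proof -
  have "integral\<^sup>L M (\<lambda>z. \<Sum>i\<in>A. \<Sum>j\<in>B. f i j z) = (\<Sum>i\<in>A. integral\<^sup>L M (\<lambda>z. \<Sum>j\<in>B. f i j z))"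
    by (rule Bochner_Integration.integral_sum) (auto intro!: Bochner_Integration.integrable_sum assms)
  also have "\<dots> = (\<Sum>i\<in>A. \<Sum>j\<in>B. integral\<^sup>L M (f i j))"
    by (intro sum.cong refl Bochner_Integration.integral_sum assms)
  finally show ?thesis .
qed

lemma symsum_norm:
  assumes "N1 \<le> N"
  shows "norm_L2 (conf N) (symsum (fsab N1) N) = sqrt (real (N choose N1))"
proof -
  let ?A = "{g \<in> G N. ones N g = N1}"
  have fA: "finite ?A" by simp
  have AG: "?A \<subseteq> G N" by auto
  have eq: "(cmod (symsum (fsab N1) N z))^2 = Re (\<Sum>g\<in>?A. \<Sum>g'\<in>?A. tensor g N z * cnj (tensor g' N z))" for z
  proof -
    have "(cmod (symsum (fsab N1) N z))^2 = Re (symsum (fsab N1) N z * cnj (symsum (fsab N1) N z))"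
      by (metis Re_complex_of_real complex_norm_square)
    also have "symsum (fsab N1) N z * cnj (symsum (fsab N1) N z) = (\<Sum>g\<in>?A. \<Sum>g'\<in>?A. tensor g N z * cnj (tensor g' N z))"
      unfolding symsum_eq[OF assms] cnj_sum sum_product ..
    finally show ?thesis .
  qed
  have int: "integrable (conf N) (\<lambda>z. \<Sum>g\<in>?A. \<Sum>g'\<in>?A. tensor g N z * cnj (tensor g' N z))"
    by (intro Bochner_Integration.integrable_sum tensor_orth(1)) auto
  have "integral\<^sup>L (conf N) (\<lambda>z. \<Sum>g\<in>?A. \<Sum>g'\<in>?A. tensor g N z * cnj (tensor g' N z))
     = (\<Sum>g\<in>?A. \<Sum>g'\<in>?A. (if g = g' then 1 else 0))"
  proof -
    have "integral\<^sup>L (conf N) (\<lambda>z. \<Sum>g\<in>?A. \<Sum>g'\<in>?A. tensor g N z * cnj (tensor g' N z))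
       = (\<Sum>g\<in>?A. \<Sum>g'\<in>?A. integral\<^sup>L (conf N) (\<lambda>z. tensor g N z * cnj (tensor g' N z)))"
      by (rule integral_double_sum) (auto intro: tensor_orth(1))
    also have "\<dots> = (\<Sum>g\<in>?A. \<Sum>g'\<in>?A. (if g = g' then 1 else 0))"
      by (intro sum.cong refl) (auto simp: tensor_orth(2))
    finally show ?thesis .
  qed
  also have "\<dots> = of_nat (card ?A)" by (simp add: sum.delta)
  finally have I: "integral\<^sup>L (conf N) (\<lambda>z. \<Sum>g\<in>?A. \<Sum>g'\<in>?A. tensor g N z * cnj (tensor g' N z)) = of_nat (card ?A)" .
  have "integral\<^sup>L (conf N) (\<lambda>z. (cmod (symsum (fsab N1) N z))^2) = Re (of_nat (card ?A))"
    unfolding eq using integral_Re[OF int] I by simp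
  then show ?thesis unfolding norm_L2_def using count_ones by simp
qed

lemma div_cnj_div: "(u / complex_of_real r) * cnj (v / complex_of_real r) = u * cnj v / (complex_of_real r * complex_of_real r)"
  by (simp add: field_simps)

lemma vee_kernel:
  shows "proj_kernel (vee2 a N1 b N2) x y =
    (\<Sum>g\<in>G (N1 + N2). \<Sum>g'\<in>G (N1 + N2).
       (if ones (N1 + N2) g = N1 \<and> ones (N1 + N2) g' = N1 then 1 / of_nat ((N1 + N2) choose N1) else 0)
        * (tensor g (N1 + N2) x * cnj (tensor g' (N1 + N2) y)))"
proof -
  let ?N = "N1 + N2"
  let ?A = "{g \<in> G ?N. ones ?N g = N1}"
  let ?C = "(?N choose N1)"
  have fs: "(\<lambda>i. if i < N1 then a else b) = fsab N1" by (simp add: fsab_def)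
  have Cpos: "?C > 0" by simp
  have "proj_kernel (vee2 a N1 b N2) x y = symsum (fsab N1) ?N x * cnj (symsum (fsab N1) ?N y)
        / (complex_of_real (sqrt (real ?C)) * complex_of_real (sqrt (real ?C)))"
    unfolding proj_kernel_def vee2_def fs symprod_def symsum_norm[of N1 ?N, simplified] by (rule div_cnj_div)
  also have "complex_of_real (sqrt (real ?C)) * complex_of_real (sqrt (real ?C)) = of_nat ?C"
  proof -
    have "sqrt (real ?C) * sqrt (real ?C) = real ?C" by simp
    then show ?thesis by (metis of_real_mult of_real_of_nat_eq)
  qed
  also have "symsum (fsab N1) ?N x * cnj (symsum (fsab N1) ?N y) =
      (\<Sum>g\<in>?A. \<Sum>g'\<in>?A. tensor g ?N x * cnj (tensor g' ?N y))"
    unfolding symsum_eq[of N1 ?N, simplified] cnj_sum sum_product ..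
  also have "\<dots> = (\<Sum>g\<in>G ?N. \<Sum>g'\<in>G ?N. (if ones ?N g = N1 \<and> ones ?N g' = N1 then 1 else 0) * (tensor g ?N x * cnj (tensor g' ?N y)))"
    by (simp only: sum.inter_filter[OF finite_G]) (auto intro!: sum.cong)
  finally have eq: "proj_kernel (vee2 a N1 b N2) x y = (\<Sum>g\<in>G ?N. \<Sum>g'\<in>G ?N. (if ones ?N g = N1 \<and> ones ?N g' = N1 then 1 else 0) * (tensor g ?N x * cnj (tensor g' ?N y))) / of_nat ?C" .
  show ?thesis unfolding eq sum_divide_distrib by (intro sum.cong refl) simp
qed

end


definition eph :: "real \<Rightarrow> complex" where
  "eph t = exp (- \<i> * complex_of_real t)"

lemma lint_cont:
  fixes f :: "real \<Rightarrow> complex"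
  assumes "continuous_on {0..2*pi} f"
  shows "(LINT t:{0..2*pi}|lborel. f t) = integral {0..2*pi} f"
proof -
  have "set_integrable lborel {0..2*pi} f"
    unfolding set_integrable_def by (rule borel_integrable_compact) (auto intro: assms)
  then show ?thesis by (rule set_borel_integral_eq_integral(2))
qed

lemma eph_pow: "eph t ^ j * cnj (eph t) ^ j' = exp (\<i> * of_int (int j' - int j) * complex_of_real t)"
proof -
  have "eph t ^ j = exp (of_nat j * (- \<i> * complex_of_real t))"
    unfolding eph_def by (rule exp_of_nat_mult[symmetric])
  moreover have "cnj (eph t) ^ j' = exp (of_nat j' * (\<i> * complex_of_real t))"
    unfolding eph_def exp_cnj by (subst exp_of_nat_mult) simp
  ultimately show ?thesis by (simp add: exp_add[symmetric] algebra_simps)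
qed

lemma cont_eph: "continuous_on S (\<lambda>t. eph t ^ j * cnj (eph t) ^ j')"
  unfolding eph_pow by (intro continuous_intros)

lemma phase_integral:
  "(LINT t:{0..2*pi}|lborel. eph t ^ j * cnj (eph t) ^ j') = (if j = j' then complex_of_real (2 * pi) else 0)"
proof -
  define m where "m = int j' - int j"
  have "(LINT t:{0..2*pi}|lborel. eph t ^ j * cnj (eph t) ^ j') = integral {0..2*pi} (\<lambda>t. exp (\<i> * of_int m * complex_of_real t))"
    by (subst lint_cont) (auto simp: eph_pow m_def intro!: continuous_intros)
  also have "\<dots> = (if j = j' then complex_of_real (2 * pi) else 0)"
  proof (cases "j = j'")
    case True
    then show ?thesis by (simp add: m_def scaleR_conv_of_real)
  next
    case False
    then have m0: "m \<noteq> 0" by (simp add: m_def)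
    define c where "c = \<i> * of_int m"
    have c0: "c \<noteq> 0" using m0 by (simp add: c_def)
    have "((\<lambda>t. exp (c * complex_of_real t)) has_integral
            (exp (c * complex_of_real (2*pi)) / c - exp (c * complex_of_real 0) / c)) {0..2*pi}"
    proof -
      have "((\<lambda>t. exp (c * complex_of_real t) / c) has_vector_derivative exp (c * complex_of_real x)) (at x within {0..2*pi})" for x
      proof -
        have "((\<lambda>z. exp (c * z) / c) has_field_derivative exp (c * complex_of_real x)) (at (complex_of_real x))"
          using c0 by (auto intro!: derivative_eq_intros)
        then show ?thesis by (rule has_vector_derivative_real_field)
      qed
      then show ?thesis
        by (intro fundamental_theorem_of_calculus) auto
    qed
    moreover have "exp (c * complex_of_real (2*pi)) = 1"
    proof -
      have eq: "c * complex_of_real (2*pi) = (2 * (of_int m :: complex) * complex_of_real pi) * \<i>" by (simp add: c_def algebra_simps)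
      have "exp ((2 * (of_int m :: complex) * complex_of_real pi) * \<i>) = 1"
        using exp_integer_2pi[of "real_of_int m"] by simp
      then show ?thesis unfolding eq .
    qed
    ultimately have "integral {0..2*pi} (\<lambda>t. exp (c * complex_of_real t)) = 0"
      by (auto dest: integral_unique)
    then show ?thesis using False by (simp add: c_def)
  qed
  finally show ?thesis .
qed

lemma lint_sum:
  fixes f :: "'i \<Rightarrow> real \<Rightarrow> complex"
  assumes "finite I" "\<And>i. i \<in> I \<Longrightarrow> continuous_on {0..2*pi} (f i)"
  shows "(LINT t:{0..2*pi}|lborel. (\<Sum>i\<in>I. c i * f i t)) = (\<Sum>i\<in>I. c i * (LINT t:{0..2*pi}|lborel. f i t))"
proof -
  have "(LINT t:{0..2*pi}|lborel. (\<Sum>i\<in>I. c i * f i t)) = integral {0..2*pi} (\<lambda>t. \<Sum>i\<in>I. c i * f i t)"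
    by (rule lint_cont) (auto intro!: continuous_intros assms)
  also have "\<dots> = (\<Sum>i\<in>I. integral {0..2*pi} (\<lambda>t. c i * f i t))"
    by (rule integral_sum) (auto intro!: integrable_continuous_interval continuous_intros assms)
  also have "\<dots> = (\<Sum>i\<in>I. c i * integral {0..2*pi} (f i))"
    by (intro sum.cong refl integral_mult_right)
  also have "\<dots> = (\<Sum>i\<in>I. c i * (LINT t:{0..2*pi}|lborel. f i t))"
    by (intro sum.cong refl arg_cong2[where f="(*)"] lint_cont[symmetric] assms)
  finally show ?thesis .
qed

context two_orth begin

lemma card_not_a: "card {i. i < N \<and> g i \<noteq> a} = N - ones N g"
proof -
  have "{i. i < N \<and> g i = a} \<union> {i. i < N \<and> g i \<noteq> a} = {..<N}" by auto
  moreover have "card ({i. i < N \<and> g i = a} \<union> {i. i < N \<and> g i \<noteq> a}) = card {i. i < N \<and> g i = a} + card {i. i < N \<and> g i \<noteq> a}"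
    by (rule card_Un_disjoint) auto
  ultimately have "ones N g + card {i. i < N \<and> g i \<noteq> a} = N"
    unfolding ones_def by simp
  then show ?thesis by simp
qed

lemma prod_expand:
  "(\<Prod>i<N. \<alpha> * a (x i) + \<beta> * b (x i)) = (\<Sum>g\<in>G N. \<alpha> ^ ones N g * \<beta> ^ (N - ones N g) * tensor g N x)"
proof -
  define w where "w u = (if u = a then \<alpha> else \<beta>)" for u
  have "(\<Prod>i<N. \<alpha> * a (x i) + \<beta> * b (x i)) = (\<Prod>i<N. \<Sum>u\<in>{a,b}. w u * u (x i))"
    using a_ne_b by (simp add: w_def)
  also have "\<dots> = (\<Sum>g\<in>G N. \<Prod>i<N. w (g i) * g i (x i))"
    unfolding G_def by (rule prod_sum_PiE) auto
  also have "\<dots> = (\<Sum>g\<in>G N. \<alpha> ^ ones N g * \<beta> ^ (N - ones N g) * tensor g N x)"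
  proof (intro sum.cong refl)
    fix g assume "g \<in> G N"
    have "(\<Prod>i<N. w (g i)) = (\<Prod>i\<in>{i. i < N \<and> g i = a}. \<alpha>) * (\<Prod>i\<in>{i. i < N \<and> g i \<noteq> a}. \<beta>)"
    proof -
      have s1: "{..<N} \<inter> {x. g x = a} = {i. i < N \<and> g i = a}" by auto
      have s2: "{..<N} \<inter> - {x. g x = a} = {i. i < N \<and> g i \<noteq> a}" by auto
      show ?thesis unfolding w_def by (subst prod.If_cases) (simp_all add: s1 s2)
    qed
    also have "\<dots> = \<alpha> ^ ones N g * \<beta> ^ (N - ones N g)"
      by (simp add: ones_def card_not_a)
    finally show "(\<Prod>i<N. w (g i) * g i (x i)) = \<alpha> ^ ones N g * \<beta> ^ (N - ones N g) * tensor g N x"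
      by (simp add: tensor_def prod.distrib)
  qed
  finally show ?thesis .
qed


lemma mixed_kernel_eq:
  assumes N: "N1 + N2 = N" "N > 0"
  shows "mixed_kernel a N1 b N2 N x y = (\<Sum>g\<in>G N. \<Sum>g'\<in>G N.
      (if ones N g = ones N g' then complex_of_real ((real N1 / real N) ^ ones N g * (real N2 / real N) ^ (N - ones N g)) else 0)
      * (tensor g N x * cnj (tensor g' N y)))"
proof -
  define sp where "sp = complex_of_real (sqrt (real N1 / real N))"
  define sq where "sq = complex_of_real (sqrt (real N2 / real N))"
  define X where "X (p :: (nat \<Rightarrow> real^3 \<Rightarrow> complex) \<times> (nat \<Rightarrow> real^3 \<Rightarrow> complex)) = tensor (fst p) N x * cnj (tensor (snd p) N y)" for p
  define j where "j (p :: (nat \<Rightarrow> real^3 \<Rightarrow> complex) \<times> (nat \<Rightarrow> real^3 \<Rightarrow> complex)) = ones N (fst p)" for p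
  define j' where "j' (p :: (nat \<Rightarrow> real^3 \<Rightarrow> complex) \<times> (nat \<Rightarrow> real^3 \<Rightarrow> complex)) = ones N (snd p)" for p
  define R where "R (p :: (nat \<Rightarrow> real^3 \<Rightarrow> complex) \<times> (nat \<Rightarrow> real^3 \<Rightarrow> complex)) = sp ^ j p * sp ^ j' p * sq ^ (N - j p) * sq ^ (N - j' p)" for p
  define P1 where "P1 (p :: (nat \<Rightarrow> real^3 \<Rightarrow> complex) \<times> (nat \<Rightarrow> real^3 \<Rightarrow> complex)) t = eph t ^ j p * cnj (eph t) ^ j' p" for p t
  define P2 where "P2 (p :: (nat \<Rightarrow> real^3 \<Rightarrow> complex) \<times> (nat \<Rightarrow> real^3 \<Rightarrow> complex)) t = eph t ^ (N - j p) * cnj (eph t) ^ (N - j' p)" for p t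
  let ?GG = "G N \<times> G N"
  have psi: "psi_theta a N1 b N2 N t1 t2 z = (sp * eph t1) * a z + (sq * eph t2) * b z" for t1 t2 z
    by (simp add: psi_theta_def sp_def sq_def eph_def)
  have kern: "proj_kernel (tensor (\<lambda>_. psi_theta a N1 b N2 N t1 t2) N) x y
      = (\<Sum>p\<in>?GG. (R p * X p * P1 p t1) * P2 p t2)" for t1 t2
  proof -
    have "proj_kernel (tensor (\<lambda>_. psi_theta a N1 b N2 N t1 t2) N) x y
       = (\<Sum>g\<in>G N. (sp * eph t1) ^ ones N g * (sq * eph t2) ^ (N - ones N g) * tensor g N x) *
         cnj (\<Sum>g\<in>G N. (sp * eph t1) ^ ones N g * (sq * eph t2) ^ (N - ones N g) * tensor g N y)"
      unfolding proj_kernel_def tensor_def[of "\<lambda>_. psi_theta a N1 b N2 N t1 t2"] psi prod_expand ..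
    also have "\<dots> = (\<Sum>p\<in>?GG. ((sp * eph t1) ^ j p * (sq * eph t2) ^ (N - j p) * tensor (fst p) N x) *
         cnj ((sp * eph t1) ^ j' p * (sq * eph t2) ^ (N - j' p) * tensor (snd p) N y))"
      unfolding cnj_sum sum_product sum.cartesian_product j_def j'_def by (simp add: case_prod_beta)
    also have "\<dots> = (\<Sum>p\<in>?GG. (R p * X p * P1 p t1) * P2 p t2)"
    proof (intro sum.cong refl)
      fix p
      have csp: "cnj sp = sp" "cnj sq = sq" by (simp_all add: sp_def sq_def)
      show "(sp * eph t1) ^ j p * (sq * eph t2) ^ (N - j p) * tensor (fst p) N x *
         cnj ((sp * eph t1) ^ j' p * (sq * eph t2) ^ (N - j' p) * tensor (snd p) N y) = R p * X p * P1 p t1 * P2 p t2"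
        unfolding R_def X_def P1_def P2_def by (simp add: csp power_mult_distrib mult_ac)
    qed
    finally show ?thesis .
  qed
  have contP: "continuous_on {0..2*pi} (P1 p)" "continuous_on {0..2*pi} (P2 p)" for p
    unfolding P1_def P2_def by (auto intro: cont_eph)
  have inner: "(LINT t2:{0..2*pi}|lborel. proj_kernel (tensor (\<lambda>_. psi_theta a N1 b N2 N t1 t2) N) x y)
     = (\<Sum>p\<in>?GG. (R p * X p * (if j p = j' p then complex_of_real (2*pi) else 0)) * P1 p t1)" for t1
  proof -
    have "(LINT t2:{0..2*pi}|lborel. proj_kernel (tensor (\<lambda>_. psi_theta a N1 b N2 N t1 t2) N) x y)
       = (\<Sum>p\<in>?GG. (R p * X p * P1 p t1) * (LINT t2:{0..2*pi}|lborel. P2 p t2))"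
      unfolding kern by (rule lint_sum) (auto intro: contP)
    also have "\<dots> = (\<Sum>p\<in>?GG. (R p * X p * (if j p = j' p then complex_of_real (2*pi) else 0)) * P1 p t1)"
    proof (intro sum.cong refl)
      fix p assume "p \<in> ?GG"
      have "j p \<le> N" "j' p \<le> N" by (simp_all add: j_def j'_def ones_le)
      then have "(N - j p = N - j' p) = (j p = j' p)" by arith
      then show "R p * X p * P1 p t1 * (LINT t2:{0..2*pi}|lborel. P2 p t2) = R p * X p * (if j p = j' p then complex_of_real (2*pi) else 0) * P1 p t1"
        unfolding P2_def phase_integral by simp
    qed
    finally show ?thesis .
  qed
  have outer: "(LINT t1:{0..2*pi}|lborel. LINT t2:{0..2*pi}|lborel. proj_kernel (tensor (\<lambda>_. psi_theta a N1 b N2 N t1 t2) N) x y)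
     = (\<Sum>p\<in>?GG. (R p * X p * (if j p = j' p then complex_of_real (2*pi) else 0)) * (if j p = j' p then complex_of_real (2*pi) else 0))"
  proof -
    have "(LINT t1:{0..2*pi}|lborel. (\<Sum>p\<in>?GG. (R p * X p * (if j p = j' p then complex_of_real (2*pi) else 0)) * P1 p t1))
      = (\<Sum>p\<in>?GG. (R p * X p * (if j p = j' p then complex_of_real (2*pi) else 0)) * (LINT t1:{0..2*pi}|lborel. P1 p t1))"
      by (rule lint_sum) (auto intro: contP)
    also have "\<dots> = (\<Sum>p\<in>?GG. (R p * X p * (if j p = j' p then complex_of_real (2*pi) else 0)) * (if j p = j' p then complex_of_real (2*pi) else 0))"
      by (intro sum.cong refl) (simp add: P1_def phase_integral)
    finally show ?thesis unfolding inner .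
  qed
  have "mixed_kernel a N1 b N2 N x y = (\<Sum>p\<in>?GG. (if j p = j' p then R p else 0) * X p)"
  proof -
    have "mixed_kernel a N1 b N2 N x y = complex_of_real (1 / (2 * pi)^2) *
       (\<Sum>p\<in>?GG. (R p * X p * (if j p = j' p then complex_of_real (2*pi) else 0)) * (if j p = j' p then complex_of_real (2*pi) else 0))"
      unfolding mixed_kernel_def outer ..
    also have "\<dots> = (\<Sum>p\<in>?GG. (if j p = j' p then R p else 0) * X p)"
      unfolding sum_distrib_left
    proof (intro sum.cong refl)
      fix p
      have "complex_of_real (1 / (2 * pi)^2) * (complex_of_real (2*pi) * complex_of_real (2*pi)) = 1"
        by (simp flip: of_real_mult add: power2_eq_square)
      then show "complex_of_real (1 / (2 * pi)^2) * (R p * X p * (if j p = j' p then complex_of_real (2*pi) else 0) * (if j p = j' p then complex_of_real (2*pi) else 0))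
        = (if j p = j' p then R p else 0) * X p"
      proof (cases "j p = j' p")
        case True
        have "complex_of_real (1 / (2 * pi)^2) * (R p * X p * complex_of_real (2*pi) * complex_of_real (2*pi))
          = (R p * X p) * (complex_of_real (1 / (2 * pi)^2) * (complex_of_real (2*pi) * complex_of_real (2*pi)))"
          by (simp only: mult_ac)
        then show ?thesis using True \<open>complex_of_real (1 / (2 * pi)^2) * (complex_of_real (2*pi) * complex_of_real (2*pi)) = 1\<close>
          by simp
      qed simp
    qed
    finally show ?thesis .
  qed
  also have "\<dots> = (\<Sum>p\<in>?GG. (if j p = j' p then complex_of_real ((real N1 / real N) ^ j p * (real N2 / real N) ^ (N - j p)) else 0) * X p)"
  proof (intro sum.cong refl)
    fix p
    have "sp * sp = complex_of_real (real N1 / real N)" unfolding sp_def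
      by (simp flip: of_real_mult)
    moreover have "sq * sq = complex_of_real (real N2 / real N)" unfolding sq_def
      by (simp flip: of_real_mult)
    ultimately have "j p = j' p \<Longrightarrow> R p = complex_of_real ((real N1 / real N) ^ j p * (real N2 / real N) ^ (N - j p))"
      unfolding R_def by (simp add: power_mult_distrib[symmetric] mult_ac flip: power_mult_distrib)
    then show "(if j p = j' p then R p else 0) * X p = (if j p = j' p then complex_of_real ((real N1 / real N) ^ j p * (real N2 / real N) ^ (N - j p)) else 0) * X p"
      by auto
  qed
  finally show ?thesis
    unfolding X_def j_def j'_def by (simp add: sum.cartesian_product case_prod_beta)
qed

end


lemma L2_lin_meas:
  fixes u :: "'a \<Rightarrow> complex"
  assumes "u \<in> L2 M" "\<And>i. i \<in> I \<Longrightarrow> e i \<in> L2 M"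
  shows "(\<lambda>x. u x - (\<Sum>i\<in>I. c i * e i x)) \<in> borel_measurable M"
proof -
  have "u \<in> borel_measurable M" "\<And>i. i \<in> I \<Longrightarrow> e i \<in> borel_measurable M"
    using assms by (auto simp: L2_def)
  then show ?thesis by measurable
qed

lemma mult_cnj_sq: "z * cnj z = (complex_of_real (cmod z))^2" "cnj z * z = (complex_of_real (cmod z))^2"
  by (metis complex_norm_square of_real_power, metis complex_norm_square of_real_power mult.commute)

lemma bessel:
  fixes u :: "'a \<Rightarrow> complex"
  assumes u: "u \<in> L2 M" and e: "\<And>i. i < m \<Longrightarrow> e i \<in> L2 M" and on: "orthonormal_fam M m e"
  shows "(\<Sum>i<m. (cmod (inner_L2 M (e i) u))^2) \<le> Re (inner_L2 M u u)"
proof -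
  define c where "c i = inner_L2 M (e i) u" for i
  define v where "v x = u x - (\<Sum>i<m. c i * e i x)" for x
  have ee: "inner_L2 M (e i) (e j) = (if i = j then 1 else 0)" if "i < m" "j < m" for i j
    using on that by (auto simp: orthonormal_fam_def)
  have I1: "integrable M (\<lambda>x. cnj (u x) * u x)" by (rule L2_cnj_mult_integrable[OF u u])
  have I2: "integrable M (\<lambda>x. cnj (u x) * e j x)" if "j < m" for j by (rule L2_cnj_mult_integrable[OF u e[OF that]])
  have I3: "integrable M (\<lambda>x. cnj (e i x) * u x)" if "i < m" for i by (rule L2_cnj_mult_integrable[OF e[OF that] u])
  have I4: "integrable M (\<lambda>x. cnj (e i x) * e j x)" if "i < m" "j < m" for i j by (rule L2_cnj_mult_integrable[OF e[OF that(1)] e[OF that(2)]])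
  have pw: "cnj (v x) * v x = cnj (u x) * u x - (\<Sum>j<m. c j * (cnj (u x) * e j x))
      - (\<Sum>i<m. cnj (c i) * (cnj (e i x) * u x)) + (\<Sum>i<m. \<Sum>j<m. (cnj (c i) * c j) * (cnj (e i x) * e j x))" for x
  proof -
    have "cnj (v x) * v x = (cnj (u x) - (\<Sum>i<m. cnj (c i) * cnj (e i x))) * (u x - (\<Sum>j<m. c j * e j x))"
      by (simp add: v_def cnj_sum)
    also have "\<dots> = cnj (u x) * u x - cnj (u x) * (\<Sum>j<m. c j * e j x) - (\<Sum>i<m. cnj (c i) * cnj (e i x)) * u x
        + (\<Sum>i<m. cnj (c i) * cnj (e i x)) * (\<Sum>j<m. c j * e j x)"
      by (simp add: algebra_simps)
    also have "\<dots> = cnj (u x) * u x - (\<Sum>j<m. c j * (cnj (u x) * e j x))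
      - (\<Sum>i<m. cnj (c i) * (cnj (e i x) * u x)) + (\<Sum>i<m. \<Sum>j<m. (cnj (c i) * c j) * (cnj (e i x) * e j x))"
      unfolding sum_product sum_distrib_left sum_distrib_right by (simp add: mult_ac) (rule sum.swap[THEN trans], simp add: mult_ac)
    finally show ?thesis .
  qed
  have intv: "integrable M (\<lambda>x. cnj (v x) * v x)"
    unfolding pw
    by (intro Bochner_Integration.integrable_diff Bochner_Integration.integrable_add Bochner_Integration.integrable_sum
        integrable_mult_right I1 I2 I3 I4) auto
  have "integral\<^sup>L M (\<lambda>x. cnj (v x) * v x) = inner_L2 M u u - (\<Sum>j<m. c j * inner_L2 M u (e j))
      - (\<Sum>i<m. cnj (c i) * inner_L2 M (e i) u) + (\<Sum>i<m. \<Sum>j<m. (cnj (c i) * c j) * inner_L2 M (e i) (e j))"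
  proof -
    have A: "integral\<^sup>L M (\<lambda>x. \<Sum>j<m. c j * (cnj (u x) * e j x)) = (\<Sum>j<m. c j * inner_L2 M u (e j))"
      by (subst Bochner_Integration.integral_sum) (auto intro: I2 simp: inner_L2_def)
    have B: "integral\<^sup>L M (\<lambda>x. \<Sum>i<m. cnj (c i) * (cnj (e i x) * u x)) = (\<Sum>i<m. cnj (c i) * inner_L2 M (e i) u)"
      by (subst Bochner_Integration.integral_sum) (auto intro: I3 simp: inner_L2_def)
    have C: "integral\<^sup>L M (\<lambda>x. \<Sum>i<m. \<Sum>j<m. (cnj (c i) * c j) * (cnj (e i x) * e j x))
       = (\<Sum>i<m. \<Sum>j<m. (cnj (c i) * c j) * inner_L2 M (e i) (e j))"
    proof -
      have "integral\<^sup>L M (\<lambda>x. \<Sum>i<m. \<Sum>j<m. (cnj (c i) * c j) * (cnj (e i x) * e j x))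
         = (\<Sum>i<m. integral\<^sup>L M (\<lambda>x. \<Sum>j<m. (cnj (c i) * c j) * (cnj (e i x) * e j x)))"
        by (rule Bochner_Integration.integral_sum) (auto intro!: Bochner_Integration.integrable_sum integrable_mult_right I4)
      also have "\<dots> = (\<Sum>i<m. \<Sum>j<m. (cnj (c i) * c j) * inner_L2 M (e i) (e j))"
        by (intro sum.cong refl, subst Bochner_Integration.integral_sum) (auto intro: I4 simp: inner_L2_def)
      finally show ?thesis .
    qed
    have iA: "integrable M (\<lambda>x. \<Sum>j<m. c j * (cnj (u x) * e j x))"
      by (auto intro!: Bochner_Integration.integrable_sum integrable_mult_right I2)
    have iB: "integrable M (\<lambda>x. \<Sum>i<m. cnj (c i) * (cnj (e i x) * u x))"
      by (auto intro!: Bochner_Integration.integrable_sum integrable_mult_right I3)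
    have iC: "integrable M (\<lambda>x. \<Sum>i<m. \<Sum>j<m. (cnj (c i) * c j) * (cnj (e i x) * e j x))"
      by (auto intro!: Bochner_Integration.integrable_sum integrable_mult_right I4)
    show ?thesis unfolding pw
      by (simp add: Bochner_Integration.integral_add Bochner_Integration.integral_diff
          Bochner_Integration.integrable_diff I1 iA iB iC A B C inner_L2_def[of M u u])
  qed
  also have "\<dots> = inner_L2 M u u - (\<Sum>i<m. of_real ((cmod (c i))^2))"
  proof -
    have s1: "(\<Sum>j<m. c j * inner_L2 M u (e j)) = (\<Sum>i<m. of_real ((cmod (c i))^2))"
      by (intro sum.cong refl) (simp add: c_def inner_L2_swap[of M u] mult_cnj_sq mult.commute)
    have s2: "(\<Sum>i<m. cnj (c i) * inner_L2 M (e i) u) = (\<Sum>i<m. of_real ((cmod (c i))^2))"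
      by (intro sum.cong refl) (simp add: c_def mult_cnj_sq mult.commute)
    have s3: "(\<Sum>i<m. \<Sum>j<m. (cnj (c i) * c j) * inner_L2 M (e i) (e j)) = (\<Sum>i<m. of_real ((cmod (c i))^2))"
      by (intro sum.cong refl) (simp add: ee if_distrib[of "\<lambda>z. _ * z"] sum.delta mult_cnj_sq mult.commute cong: if_cong)
    show ?thesis unfolding s1 s2 s3 by simp
  qed
  finally have eqv: "integral\<^sup>L M (\<lambda>x. cnj (v x) * v x) = inner_L2 M u u - (\<Sum>i<m. of_real ((cmod (c i))^2))" .
  have "0 \<le> integral\<^sup>L M (\<lambda>x. Re (cnj (v x) * v x))"
    by (rule integral_nonneg_AE) (simp add: AE_I2)
  also have "\<dots> = Re (integral\<^sup>L M (\<lambda>x. cnj (v x) * v x))"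
    by (rule integral_Re[OF intv])
  finally show ?thesis unfolding eqv c_def by simp
qed

context two_orth begin

lemma apply_kernel_eq:
  assumes K: "\<And>x y. K x y = (\<Sum>h\<in>G k. \<Sum>h'\<in>G k. D h h' * (tensor h k x * cnj (tensor h' k y)))"
    and f: "f \<in> L2 (conf k)"
  shows "apply_kernel (conf k) K f x = (\<Sum>h\<in>G k. \<Sum>h'\<in>G k. (D h h' * inner_L2 (conf k) (tensor h' k) f) * tensor h k x)"
proof -
  have "apply_kernel (conf k) K f x = integral\<^sup>L (conf k) (\<lambda>y. \<Sum>h\<in>G k. \<Sum>h'\<in>G k. (D h h' * tensor h k x) * (cnj (tensor h' k y) * f y))"
    unfolding apply_kernel_def K sum_distrib_right by (intro Bochner_Integration.integral_cong refl sum.cong) (simp add: mult_ac)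
  also have "\<dots> = (\<Sum>h\<in>G k. \<Sum>h'\<in>G k. integral\<^sup>L (conf k) (\<lambda>y. (D h h' * tensor h k x) * (cnj (tensor h' k y) * f y)))"
    by (rule integral_double_sum) (auto intro!: integrable_mult_right L2_cnj_mult_integrable tensor_L2 f)
  also have "\<dots> = (\<Sum>h\<in>G k. \<Sum>h'\<in>G k. (D h h' * inner_L2 (conf k) (tensor h' k) f) * tensor h k x)"
    unfolding integral_mult_right_zero inner_L2_def by (simp add: mult_ac)
  finally show ?thesis .
qed

lemma inner_apply_eq:
  assumes K: "\<And>x y. K x y = (\<Sum>h\<in>G k. \<Sum>h'\<in>G k. D h h' * (tensor h k x * cnj (tensor h' k y)))"
    and f: "f \<in> L2 (conf k)" and e: "e \<in> L2 (conf k)"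
  shows "inner_L2 (conf k) e (apply_kernel (conf k) K f) =
    (\<Sum>h\<in>G k. \<Sum>h'\<in>G k. (D h h' * inner_L2 (conf k) (tensor h' k) f) * inner_L2 (conf k) e (tensor h k))"
proof -
  have "inner_L2 (conf k) e (apply_kernel (conf k) K f) = integral\<^sup>L (conf k) (\<lambda>x. \<Sum>h\<in>G k. \<Sum>h'\<in>G k. (D h h' * inner_L2 (conf k) (tensor h' k) f) * (cnj (e x) * tensor h k x))"
    unfolding inner_L2_def[of _ e] apply_kernel_eq[OF K f] sum_distrib_left by (intro Bochner_Integration.integral_cong refl sum.cong) (simp add: mult_ac)
  also have "\<dots> = (\<Sum>h\<in>G k. \<Sum>h'\<in>G k. integral\<^sup>L (conf k) (\<lambda>x. (D h h' * inner_L2 (conf k) (tensor h' k) f) * (cnj (e x) * tensor h k x)))"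
    by (rule integral_double_sum) (auto intro!: integrable_mult_right L2_cnj_mult_integrable tensor_L2 e)
  also have "\<dots> = (\<Sum>h\<in>G k. \<Sum>h'\<in>G k. (D h h' * inner_L2 (conf k) (tensor h' k) f) * inner_L2 (conf k) e (tensor h k))"
    by (simp add: inner_L2_def)
  finally show ?thesis .
qed

lemma tensor_self: "h \<in> G k \<Longrightarrow> Re (inner_L2 (conf k) (tensor h k) (tensor h k)) = 1"
  by (simp add: tensor_inner)

lemma trace_norm_bound:
  assumes K: "\<And>x y. K x y = (\<Sum>h\<in>G k. \<Sum>h'\<in>G k. D h h' * (tensor h k x * cnj (tensor h' k y)))"
  shows "trace_norm k K \<le> ennreal (\<Sum>h\<in>G k. \<Sum>h'\<in>G k. cmod (D h h'))"
  unfolding trace_norm_def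
proof (rule Sup_least, safe)
  fix m es fs
  assume L: "\<forall>i<m. es i \<in> L2sym k \<and> fs i \<in> L2sym k" and oe: "orthonormal_fam (conf k) m es"
    and ofs: "orthonormal_fam (conf k) m fs"
  have eL: "es i \<in> L2 (conf k)" and fL: "fs i \<in> L2 (conf k)" if "i < m" for i
    using L that by (auto simp: L2sym_def)
  define A where "A h i = cmod (inner_L2 (conf k) (es i) (tensor h k))" for h i
  define B where "B h' i = cmod (inner_L2 (conf k) (tensor h' k) (fs i))" for h' i
  have bA: "(\<Sum>i<m. (A h i)^2) \<le> 1" if "h \<in> G k" for h
    unfolding A_def using bessel[OF tensor_L2[OF that] eL oe] tensor_self[OF that] by simp
  have bB: "(\<Sum>i<m. (B h i)^2) \<le> 1" if "h \<in> G k" for h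
  proof -
    have "(\<Sum>i<m. (B h i)^2) = (\<Sum>i<m. (cmod (inner_L2 (conf k) (fs i) (tensor h k)))^2)"
      unfolding B_def by (intro sum.cong refl) (simp add: inner_L2_swap[of _ "tensor h k"])
    then show ?thesis using bessel[OF tensor_L2[OF that] fL ofs] tensor_self[OF that] by simp
  qed
  have AB: "(\<Sum>i<m. B h' i * A h i) \<le> 1" if "h \<in> G k" "h' \<in> G k" for h h'
  proof -
    have "(\<Sum>i<m. B h' i * A h i) \<le> (\<Sum>i<m. ((B h' i)^2 + (A h i)^2) / 2)"
    proof (rule sum_mono)
      fix i
      have "0 \<le> (B h' i - A h i)^2" by simp
      then show "B h' i * A h i \<le> ((B h' i)^2 + (A h i)^2) / 2"
        by (simp add: power2_eq_square algebra_simps)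
    qed
    also have "\<dots> = ((\<Sum>i<m. (B h' i)^2) + (\<Sum>i<m. (A h i)^2)) / 2"
      unfolding sum_divide_distrib[symmetric] sum.distrib ..
    also have "\<dots> \<le> 1" using bA[OF that(1)] bB[OF that(2)] by simp
    finally show ?thesis .
  qed
  have "(\<Sum>i<m. cmod (inner_L2 (conf k) (es i) (apply_kernel (conf k) K (fs i))))
      \<le> (\<Sum>i<m. \<Sum>h\<in>G k. \<Sum>h'\<in>G k. cmod (D h h') * (B h' i * A h i))"
  proof (rule sum_mono)
    fix i assume "i \<in> {..<m}"
    then have i: "i < m" by simp
    have "cmod (inner_L2 (conf k) (es i) (apply_kernel (conf k) K (fs i)))
       = cmod (\<Sum>h\<in>G k. \<Sum>h'\<in>G k. (D h h' * inner_L2 (conf k) (tensor h' k) (fs i)) * inner_L2 (conf k) (es i) (tensor h k))"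
      unfolding inner_apply_eq[OF K fL[OF i] eL[OF i]] ..
    also have "\<dots> \<le> (\<Sum>h\<in>G k. \<Sum>h'\<in>G k. cmod ((D h h' * inner_L2 (conf k) (tensor h' k) (fs i)) * inner_L2 (conf k) (es i) (tensor h k)))"
      by (rule order_trans[OF norm_sum sum_mono]) (rule norm_sum)
    also have "\<dots> = (\<Sum>h\<in>G k. \<Sum>h'\<in>G k. cmod (D h h') * (B h' i * A h i))"
      by (simp add: A_def B_def norm_mult mult.assoc)
    finally show "cmod (inner_L2 (conf k) (es i) (apply_kernel (conf k) K (fs i))) \<le> (\<Sum>h\<in>G k. \<Sum>h'\<in>G k. cmod (D h h') * (B h' i * A h i))" .
  qed
  also have "\<dots> = (\<Sum>h\<in>G k. \<Sum>h'\<in>G k. cmod (D h h') * (\<Sum>i<m. B h' i * A h i))"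
    by (simp add: sum_distrib_left sum.swap[of _ "{..<m}"])
  also have "\<dots> \<le> (\<Sum>h\<in>G k. \<Sum>h'\<in>G k. cmod (D h h'))"
    by (intro sum_mono) (auto intro: mult_left_le AB)
  finally show "ennreal (\<Sum>i<m. cmod (inner_L2 (conf k) (es i) (apply_kernel (conf k) K (fs i))))
      \<le> ennreal (\<Sum>h\<in>G k. \<Sum>h'\<in>G k. cmod (D h h'))"
    by (rule ennreal_leI)
qed

end


definition ff :: "nat \<Rightarrow> nat \<Rightarrow> real" where
  "ff n m = (\<Prod>i<m. real n - real i)"

lemma ff_fact: "m \<le> n \<Longrightarrow> ff n m = fact n / fact (n - m)"
proof (induction m)
  case 0 then show ?case by (simp add: ff_def)
next
  case (Suc m)
  then have IH: "ff n m = fact n / fact (n - m)" by simp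
  have "n - m = Suc (n - Suc m)" using Suc.prems by simp
  then have "fact (n - m) = real (n - m) * (fact (n - Suc m) :: real)" by simp
  then have "fact (n - Suc m) = fact (n - m) / (real (n - m) :: real)"
    using Suc.prems by simp
  then have "fact n / fact (n - Suc m) = fact n / fact (n - m) * real (n - m)"
    by simp
  moreover have "real (n - m) = real n - real m" using Suc.prems by simp
  ultimately have "fact n / fact (n - Suc m) = fact n / fact (n - m) * (real n - real m)"
    by simp
  then show ?case using IH by (simp add: ff_def)
qed

lemma ff_zero: "n < m \<Longrightarrow> ff n m = 0"
  unfolding ff_def by (rule prod_zero) (auto intro!: bexI[of _ n])

lemma prod_split_reindex:
  fixes f :: "nat \<Rightarrow> real"
  assumes "j \<le> k"
  shows "(\<Prod>i<k. f i) = (\<Prod>i<j. f i) * (\<Prod>i<k - j. f (j + i))"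
proof -
  have "{..<k} = {..<j} \<union> {j..<k}" using assms by auto
  then have "(\<Prod>i<k. f i) = prod f ({..<j} \<union> {j..<k})" by simp
  also have "\<dots> = (\<Prod>i<j. f i) * (\<Prod>i\<in>{j..<k}. f i)"
    by (rule prod.union_disjoint) auto
  finally have "(\<Prod>i<k. f i) = (\<Prod>i<j. f i) * (\<Prod>i\<in>{j..<k}. f i)" .
  moreover have "(\<Prod>i\<in>{j..<k}. f i) = (\<Prod>i<k - j. f (j + i))"
  proof -
    have "{j..<k} = (\<lambda>i. j + i) ` {..<k - j}"
    proof -
      have "x \<in> (\<lambda>i. j + i) ` {..<k - j}" if "j \<le> x" "x < k" for x
        using that by (intro image_eqI[of _ _ "x - j"]) auto
      then show ?thesis by auto
    qed
    then show ?thesis by (simp add: prod.reindex)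
  qed
  ultimately show ?thesis by simp
qed

lemma ratio_prod:
  fixes N N1 N2 k j :: nat
  assumes N: "N1 + N2 = N" and kN: "k \<le> N" and jk: "j \<le> k" and j1: "j \<le> N1" and l2: "k - j \<le> N2"
  shows "real (N - k choose (N1 - j)) / real (N choose N1) =
    (\<Prod>i<k. (if i < j then real N1 - real i else real N2 - real (i - j)) / (real N - real i))"
proof -
  define l where "l = k - j"
  have num: "(\<Prod>i<k. (if i < j then real N1 - real i else real N2 - real (i - j))) = ff N1 j * ff N2 l"
    unfolding ff_def l_def by (subst prod_split_reindex[OF jk]) (auto intro!: arg_cong2[where f="(*)"] prod.cong)
  have den: "(\<Prod>i<k. real N - real i) = ff N k" by (simp add: ff_def)
  have e1: "N - k - (N1 - j) = N2 - l" using assms by (simp add: l_def)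
  have le: "N1 - j \<le> N - k" using assms by simp
  have c1: "real (N - k choose (N1 - j)) = fact (N - k) / (fact (N1 - j) * fact (N2 - l))"
    using binomial_fact[OF le, where 'a=real] e1 by simp
  have nn: "N - N1 = N2" using N by simp
  have "N1 \<le> N" using N by simp
  have c2: "real (N choose N1) = fact N / (fact N1 * fact N2)"
    using binomial_fact[OF \<open>N1 \<le> N\<close>, where 'a=real] unfolding nn by simp
  have "l \<le> N2" using l2 by (simp add: l_def)
  have "N - k \<le> N" by simp
  show ?thesis
    unfolding prod_dividef num den c1 c2 ff_fact[OF j1] ff_fact[OF \<open>l \<le> N2\<close>] ff_fact[OF kN]
    by (simp add: field_simps)
qed

lemma prod_diff_bound:
  fixes f g :: "nat \<Rightarrow> real"
  assumes "\<And>i. i < k \<Longrightarrow> \<bar>f i\<bar> \<le> 1" "\<And>i. i < k \<Longrightarrow> \<bar>g i\<bar> \<le> 1"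
  shows "\<bar>(\<Prod>i<k. f i) - (\<Prod>i<k. g i)\<bar> \<le> (\<Sum>i<k. \<bar>f i - g i\<bar>)"
  using assms
proof (induction k)
  case 0 then show ?case by simp
next
  case (Suc k)
  have IH: "\<bar>(\<Prod>i<k. f i) - (\<Prod>i<k. g i)\<bar> \<le> (\<Sum>i<k. \<bar>f i - g i\<bar>)"
    using Suc by auto
  have bg: "\<bar>\<Prod>i<k. g i\<bar> \<le> 1"
    unfolding abs_prod using Suc.prems(2) by (intro prod_le_1) auto
  have bf: "\<bar>f k\<bar> \<le> 1" using Suc.prems(1) by auto
  have "(\<Prod>i<Suc k. f i) - (\<Prod>i<Suc k. g i) = ((\<Prod>i<k. f i) - (\<Prod>i<k. g i)) * f k + (\<Prod>i<k. g i) * (f k - g k)"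
    by (simp add: algebra_simps)
  then have "\<bar>(\<Prod>i<Suc k. f i) - (\<Prod>i<Suc k. g i)\<bar> \<le> \<bar>(\<Prod>i<k. f i) - (\<Prod>i<k. g i)\<bar> * \<bar>f k\<bar> + \<bar>\<Prod>i<k. g i\<bar> * \<bar>f k - g k\<bar>"
    by (simp add: abs_mult[symmetric] abs_triangle_ineq)
  also have "\<dots> \<le> \<bar>(\<Prod>i<k. f i) - (\<Prod>i<k. g i)\<bar> * 1 + 1 * \<bar>f k - g k\<bar>"
    by (intro add_mono mult_mono bf bg) auto
  also have "\<dots> \<le> (\<Sum>i<Suc k. \<bar>f i - g i\<bar>)" using IH by simp
  finally show ?case .
qed

lemma fac1:
  fixes n n1 i :: real
  assumes "0 \<le> i" "i < n" "0 \<le> n1" "n1 \<le> n"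
  shows "\<bar>(n1 - i) / (n - i) - n1 / n\<bar> \<le> i / (n - i)"
proof -
  have n: "0 < n" "0 < n - i" using assms by auto
  have "(n1 - i) / (n - i) - n1 / n = - (i * (n - n1)) / (n * (n - i))"
    using n by (simp add: field_simps)
  also have "\<bar>\<dots>\<bar> = (i * (n - n1)) / (n * (n - i))"
    using n assms by (simp add: abs_divide abs_mult)
  also have "\<dots> = (i / (n - i)) * ((n - n1) / n)" by simp
  also have "\<dots> \<le> (i / (n - i)) * 1"
    using n assms by (intro mult_left_mono) auto
  finally show ?thesis by simp
qed

lemma fac2:
  fixes n n2 i i' :: real
  assumes "0 \<le> i'" "i' \<le> i" "i < n" "0 \<le> n2" "n2 \<le> n"
  shows "\<bar>(n2 - i') / (n - i) - n2 / n\<bar> \<le> i / (n - i)"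
proof -
  have n: "0 < n" "0 < n - i" using assms by auto
  have "(n2 - i') / (n - i) - n2 / n = (n2 * i - n * i') / (n * (n - i))"
    using n by (simp add: field_simps)
  also have "\<bar>\<dots>\<bar> = \<bar>n2 * i - n * i'\<bar> / (n * (n - i))"
    using n by (simp add: abs_divide)
  also have "\<dots> \<le> (n * i) / (n * (n - i))"
  proof (rule divide_right_mono)
    have "n2 * i \<le> n * i" using assms by (intro mult_right_mono) auto
    moreover have "n * i' \<le> n * i" using assms n by (intro mult_left_mono) auto
    moreover have "0 \<le> n2 * i" "0 \<le> n * i'" using assms n by auto
    ultimately show "\<bar>n2 * i - n * i'\<bar> \<le> n * i" by linarith
  qed (use n in auto)
  also have "\<dots> = i / (n - i)" using n by simp
  finally show ?thesis .
qed

lemma half_bound: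
  fixes n i :: real
  assumes "0 \<le> i" "2 * i \<le> n" "i < n"
  shows "i / (n - i) \<le> 2 * i / n"
proof -
  have n: "0 < n" "0 < n - i" using assms by auto
  have "i * n \<le> 2 * i * (n - i)"
  proof -
    have "i * n = 2 * i * (n - i) - i * (n - 2 * i)" by (simp add: algebra_simps)
    moreover have "0 \<le> i * (n - 2 * i)" using assms by auto
    ultimately show ?thesis by linarith
  qed
  then show ?thesis using n by (simp add: field_simps)
qed

lemma coef_bound:
  fixes N N1 N2 k j :: nat
  assumes N: "N1 + N2 = N" and N2: "2 \<le> N" and kN: "k \<le> N" and jk: "j \<le> k"
  shows "\<bar>(if j \<le> N1 then real (N - k choose (N1 - j)) else 0) / real (N choose N1)
     - (real N1 / real N) ^ j * (real N2 / real N) ^ (k - j)\<bar> \<le> 2 * real k * (real k - 1) / real N"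
proof -
  define p where "p = real N1 / real N"
  define q where "q = real N2 / real N"
  have Npos: "real N > 0" using N2 by simp
  have p01: "0 \<le> p" "p \<le> 1" using N Npos by (auto simp: p_def)
  have q01: "0 \<le> q" "q \<le> 1" using N Npos by (auto simp: q_def)
  have k1: "(real k - 1) / real N \<le> 2 * real k * (real k - 1) / real N" if "1 \<le> k"
  proof -
    have "1 * (real k - 1) \<le> (2 * real k) * (real k - 1)"
      using that by (intro mult_right_mono) auto
    then have "real k - 1 \<le> 2 * real k * (real k - 1)" by simp
    then show ?thesis using Npos by (intro divide_right_mono) auto
  qed
  consider (c1) "N1 < j" | (c2) "j \<le> N1" "N2 < k - j" | (c3) "j \<le> N1" "k - j \<le> N2" by linarith
  then show ?thesis
  proof cases
    case c1
    then have "1 \<le> j" by simp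
    have "p ^ j * q ^ (k - j) \<le> p"
    proof -
      have "p ^ j = p * p ^ (j - 1)" using \<open>1 \<le> j\<close> by (metis power_eq_if not_one_le_zero)
      moreover have "p ^ (j - 1) \<le> 1" "q ^ (k - j) \<le> 1" using p01 q01 by (auto intro: power_le_one)
      moreover have "0 \<le> p ^ (j - 1)" "0 \<le> q ^ (k - j)" using p01 q01 by auto
      ultimately have "p ^ j * q ^ (k - j) \<le> p ^ j * 1"
        using p01 by (intro mult_left_mono) auto
      also have "\<dots> = p * p ^ (j - 1)" using \<open>p ^ j = p * p ^ (j - 1)\<close> by simp
      also have "\<dots> \<le> p * 1" using \<open>p ^ (j - 1) \<le> 1\<close> p01 by (intro mult_left_mono) auto
      finally show ?thesis by simp
    qed
    moreover have "p \<le> (real k - 1) / real N"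
      unfolding p_def using c1 jk Npos by (intro divide_right_mono) auto
    moreover have "0 \<le> p ^ j * q ^ (k - j)" using p01 q01 by auto
    moreover have "(if j \<le> N1 then real (N - k choose (N1 - j)) else 0) = 0" using c1 by simp
    moreover have "(real k - 1) / real N \<le> 2 * real k * (real k - 1) / real N" using k1 \<open>1 \<le> j\<close> jk by simp
    ultimately show ?thesis unfolding p_def q_def by simp
  next
    case c2
    then have "1 \<le> k - j" by simp
    have z: "N - k choose (N1 - j) = 0" using c2 N jk kN by (intro binomial_eq_0) arith
    have "p ^ j * q ^ (k - j) \<le> q"
    proof -
      have "q ^ (k - j) = q * q ^ (k - j - 1)" using \<open>1 \<le> k - j\<close> by (metis power_eq_if not_one_le_zero)
      moreover have "q ^ (k - j - 1) \<le> 1" "p ^ j \<le> 1" using p01 q01 by (auto intro: power_le_one)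
      moreover have "0 \<le> q ^ (k - j - 1)" "0 \<le> p ^ j" using p01 q01 by auto
      ultimately have "p ^ j * q ^ (k - j) \<le> 1 * q ^ (k - j)"
        using q01 by (intro mult_right_mono) auto
      also have "\<dots> = q * q ^ (k - j - 1)" using \<open>q ^ (k - j) = q * q ^ (k - j - 1)\<close> by simp
      also have "\<dots> \<le> q * 1" using \<open>q ^ (k - j - 1) \<le> 1\<close> q01 by (intro mult_left_mono) auto
      finally show ?thesis by simp
    qed
    moreover have "q \<le> (real k - 1) / real N"
      unfolding q_def using c2 jk Npos by (intro divide_right_mono) auto
    moreover have "0 \<le> p ^ j * q ^ (k - j)" using p01 q01 by auto
    moreover have "(if j \<le> N1 then real (N - k choose (N1 - j)) else 0) = 0" using z by simp
    moreover have "(real k - 1) / real N \<le> 2 * real k * (real k - 1) / real N" using k1 \<open>1 \<le> k - j\<close> jk by simp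
    ultimately show ?thesis unfolding p_def q_def by simp
  next
    case c3
    define f where "f i = (if i < j then real N1 - real i else real N2 - real (i - j)) / (real N - real i)" for i
    define g where "g i = (if i < j then p else q)" for i
    have A: "real (N - k choose (N1 - j)) / real (N choose N1) = (\<Prod>i<k. f i)"
      unfolding f_def by (rule ratio_prod[OF N kN jk c3])
    have B: "p ^ j * q ^ (k - j) = (\<Prod>i<k. g i)"
      unfolding prod_split_reindex[OF jk, of g] by (simp add: g_def)
    have f01: "0 \<le> f i \<and> f i \<le> 1" if "i < k" for i
    proof -
      have d: "real N - real i > 0" using that kN by simp
      show ?thesis
      proof (cases "i < j")
        case True
        then have "f i = (real N1 - real i) / (real N - real i)" by (simp add: f_def)
        moreover have "0 \<le> real N1 - real i" "real N1 - real i \<le> real N - real i"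
          using True c3 N by auto
        ultimately show ?thesis using d by simp
      next
        case False
        then have "f i = (real N2 - real (i - j)) / (real N - real i)" by (simp add: f_def)
        moreover have "real (i - j) = real i - real j" using False by simp
        moreover have "0 \<le> real N2 - (real i - real j)" "real N2 - (real i - real j) \<le> real N - real i"
          using False c3 N that by auto
        ultimately show ?thesis using d by simp
      qed
    qed
    have g01: "0 \<le> g i \<and> g i \<le> 1" for i using p01 q01 by (auto simp: g_def)
    have A01: "0 \<le> (\<Prod>i<k. f i)" "(\<Prod>i<k. f i) \<le> 1"
      using f01 by (auto intro: prod_nonneg prod_le_1)
    have B01: "0 \<le> (\<Prod>i<k. g i)" "(\<Prod>i<k. g i) \<le> 1"
      using g01 by (auto intro: prod_nonneg prod_le_1)
    have "\<bar>(\<Prod>i<k. f i) - (\<Prod>i<k. g i)\<bar> \<le> 2 * real k * (real k - 1) / real N"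
    proof (cases "2 * k \<le> N")
      case True
      have "\<bar>(\<Prod>i<k. f i) - (\<Prod>i<k. g i)\<bar> \<le> (\<Sum>i<k. \<bar>f i - g i\<bar>)"
        by (rule prod_diff_bound) (use f01 g01 in auto)
      also have "\<dots> \<le> (\<Sum>i<k. 2 * (real k - 1) / real N)"
      proof (rule sum_mono)
        fix i assume "i \<in> {..<k}"
        then have ik: "i < k" by simp
        have iN: "real i < real N" using ik kN by simp
        have "\<bar>f i - g i\<bar> \<le> real i / (real N - real i)"
        proof (cases "i < j")
          case True
          then show ?thesis unfolding f_def g_def p_def using fac1[of "real i" "real N" "real N1"] iN N by auto
        next
          case False
          then have "real (i - j) \<le> real i" by simp
          then show ?thesis unfolding f_def g_def q_def using False fac2[of "real (i - j)" "real i" "real N" "real N2"] iN N by auto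
        qed
        also have "\<dots> \<le> 2 * real i / real N"
          by (rule half_bound) (use True ik in auto)
        also have "\<dots> \<le> 2 * (real k - 1) / real N"
          using ik Npos by (intro divide_right_mono) auto
        finally show "\<bar>f i - g i\<bar> \<le> 2 * (real k - 1) / real N" .
      qed
      also have "\<dots> = 2 * real k * (real k - 1) / real N" by simp
      finally show ?thesis .
    next
      case False
      then have "k \<ge> 2" using N2 by linarith
      have "\<bar>(\<Prod>i<k. f i) - (\<Prod>i<k. g i)\<bar> \<le> 1" using A01 B01 by linarith
      also have "1 \<le> 2 * real k * (real k - 1) / real N"
      proof -
        have "real N \<le> 2 * real k" using False by simp
        also have "\<dots> \<le> 2 * real k * (real k - 1)" using \<open>k \<ge> 2\<close> by simp
        finally show ?thesis using Npos by simp
      qed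
      finally show ?thesis .
    qed
    then show ?thesis using A B c3 by (simp add: p_def q_def)
  qed
qed


context two_orth begin

lemma prod_w: "g \<in> G n \<Longrightarrow> (\<Prod>i<n. if g i = a then \<alpha> else \<beta>) = \<alpha> ^ ones n g * \<beta> ^ (n - ones n g)"
proof -
  have s1: "{..<n} \<inter> {x. g x = a} = {i. i < n \<and> g i = a}" by auto
  have s2: "{..<n} \<inter> - {x. g x = a} = {i. i < n \<and> g i \<noteq> a}" by auto
  show ?thesis by (subst prod.If_cases) (simp_all add: s1 s2 ones_def card_not_a)
qed

lemma sum_powers: fixes \<alpha> \<beta> :: "'c::comm_semiring_1" shows "(\<Sum>t\<in>G n. \<alpha> ^ ones n t * \<beta> ^ (n - ones n t)) = (\<alpha> + \<beta>) ^ n"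
proof -
  define w where "w u = (if u = a then \<alpha> else \<beta>)" for u
  have "(\<alpha> + \<beta>) ^ n = (\<Prod>i<n. \<Sum>u\<in>{a,b}. w u)"
    using a_ne_b by (simp add: w_def)
  also have "\<dots> = (\<Sum>g\<in>G n. \<Prod>i<n. w (g i))"
    unfolding G_def by (rule prod_sum_PiE) auto
  also have "\<dots> = (\<Sum>t\<in>G n. \<alpha> ^ ones n t * \<beta> ^ (n - ones n t))"
    unfolding w_def by (intro sum.cong refl prod_w)
  finally show ?thesis by simp
qed

lemma card_G: "card (G k) = 2 ^ k"
  unfolding G_def using a_ne_b by (simp add: card_PiE) (simp add: numeral_2_eq_2)

lemma sum_if_const: "finite S \<Longrightarrow> (\<Sum>t\<in>S. if P t then c else 0) = of_nat (card {t\<in>S. P t}) * c"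
  by (simp add: sum.inter_filter[symmetric])

lemma diff_kernel:
  assumes N: "N1 + N2 = N" "2 \<le> N" and kN: "k \<le> N"
  shows "marginal N k (proj_kernel (vee2 a N1 b N2)) x y - marginal N k (mixed_kernel a N1 b N2 N) x y
   = (\<Sum>h\<in>G k. \<Sum>h'\<in>G k. (if ones k h = ones k h' then complex_of_real
        ((if ones k h \<le> N1 then real (N - k choose (N1 - ones k h)) else 0) / real (N choose N1)
          - (real N1 / real N) ^ ones k h * (real N2 / real N) ^ (k - ones k h)) else 0)
        * (tensor h k x * cnj (tensor h' k y)))"
proof -
  define n where "n = N - k"
  have Nkn: "N = k + n" using kN by (simp add: n_def)
  define cv where "cv g g' = (if ones N g = N1 \<and> ones N g' = N1 then 1 / of_nat (N choose N1) else (0::complex))" for g g'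
  define cm where "cm g g' = (if ones N g = ones N g' then complex_of_real ((real N1 / real N) ^ ones N g * (real N2 / real N) ^ (N - ones N g)) else 0)" for g g'
  have v: "proj_kernel (vee2 a N1 b N2) = (\<lambda>x y. \<Sum>g\<in>G N. \<Sum>g'\<in>G N. cv g g' * (tensor g N x * cnj (tensor g' N y)))"
    using vee_kernel[of N1 N2, unfolded N(1)] by (intro ext) (simp add: cv_def)
  have m: "mixed_kernel a N1 b N2 N = (\<lambda>x y. \<Sum>g\<in>G N. \<Sum>g'\<in>G N. cm g g' * (tensor g N x * cnj (tensor g' N y)))"
    using N by (intro ext) (simp add: mixed_kernel_eq cm_def)
  have oc: "ones N (catf k n h t) = ones k h + ones n t" for h t
    using ones_catf[of k n h t] by (simp add: Nkn)
  have onle: "ones n t \<le> n" for t by (rule ones_le)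
  have cV: "(\<Sum>t\<in>G n. cv (catf k n h t) (catf k n h' t)) =
      (if ones k h = ones k h' then complex_of_real ((if ones k h \<le> N1 then real (n choose (N1 - ones k h)) else 0) / real (N choose N1)) else 0)"
    for h h'
  proof (cases "ones k h = ones k h'")
    case False
    then show ?thesis unfolding cv_def oc by (auto intro!: sum.neutral)
  next
    case True
    have "(\<Sum>t\<in>G n. cv (catf k n h t) (catf k n h' t)) = (\<Sum>t\<in>G n. if ones k h + ones n t = N1 then 1 / of_nat (N choose N1) else 0)"
      unfolding cv_def oc True by simp
    also have "\<dots> = of_nat (card {t \<in> G n. ones k h + ones n t = N1}) * (1 / of_nat (N choose N1))"
      by (rule sum_if_const) simp
    also have "card {t \<in> G n. ones k h + ones n t = N1} = (if ones k h \<le> N1 then n choose (N1 - ones k h) else 0)"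
    proof (cases "ones k h \<le> N1")
      case True
      then have "{t \<in> G n. ones k h + ones n t = N1} = {t \<in> G n. ones n t = N1 - ones k h}" by auto
      then show ?thesis using True count_ones by simp
    next
      case False
      then have "{t \<in> G n. ones k h + ones n t = N1} = {}" by auto
      then show ?thesis using False by simp
    qed
    finally show ?thesis using True by simp
  qed
  have pq: "real N1 / real N + real N2 / real N = 1"
    using N by (simp add: add_divide_distrib[symmetric])
  have cM: "(\<Sum>t\<in>G n. cm (catf k n h t) (catf k n h' t)) =
      (if ones k h = ones k h' then complex_of_real ((real N1 / real N) ^ ones k h * (real N2 / real N) ^ (k - ones k h)) else 0)"
    if hG: "h \<in> G k" for h h'
  proof (cases "ones k h = ones k h'")
    case False
    then show ?thesis unfolding cm_def oc by (auto intro!: sum.neutral)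
  next
    case True
    define p where "p = real N1 / real N"
    define q where "q = real N2 / real N"
    have hk: "ones k h \<le> k" by (rule ones_le)
    have "(\<Sum>t\<in>G n. cm (catf k n h t) (catf k n h' t)) =
        (\<Sum>t\<in>G n. complex_of_real (p ^ ones k h * q ^ (k - ones k h)) * complex_of_real (p ^ ones n t * q ^ (n - ones n t)))"
    proof (intro sum.cong refl)
      fix t
      have e: "N - (ones k h + ones n t) = (k - ones k h) + (n - ones n t)"
        using hk onle[of t] Nkn by simp
      show "cm (catf k n h t) (catf k n h' t) = complex_of_real (p ^ ones k h * q ^ (k - ones k h)) * complex_of_real (p ^ ones n t * q ^ (n - ones n t))"
        unfolding cm_def oc e p_def q_def using True by (simp add: power_add mult_ac)
    qed
    also have "\<dots> = complex_of_real (p ^ ones k h * q ^ (k - ones k h)) * complex_of_real ((p + q) ^ n)"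
      unfolding sum_distrib_left[symmetric] sum_powers[symmetric] by simp
    also have "\<dots> = complex_of_real (p ^ ones k h * q ^ (k - ones k h))"
      using pq by (simp add: p_def q_def)
    finally show ?thesis using True by (simp add: p_def q_def)
  qed
  have "marginal N k (proj_kernel (vee2 a N1 b N2)) x y - marginal N k (mixed_kernel a N1 b N2 N) x y
    = (\<Sum>h\<in>G k. \<Sum>h'\<in>G k. ((\<Sum>t\<in>G n. cv (catf k n h t) (catf k n h' t)) - (\<Sum>t\<in>G n. cm (catf k n h t) (catf k n h' t)))
        * (tensor h k x * cnj (tensor h' k y)))"
    unfolding v m marginal_sum[OF kN] n_def[symmetric] sum_subtractf[symmetric]
    by (intro sum.cong refl) (simp add: algebra_simps sum_subtractf)
  also have "\<dots> = (\<Sum>h\<in>G k. \<Sum>h'\<in>G k. (if ones k h = ones k h' then complex_of_real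
        ((if ones k h \<le> N1 then real (N - k choose (N1 - ones k h)) else 0) / real (N choose N1)
          - (real N1 / real N) ^ ones k h * (real N2 / real N) ^ (k - ones k h)) else 0)
        * (tensor h k x * cnj (tensor h' k y)))"
    unfolding n_def[symmetric] by (intro sum.cong refl) (simp add: cV cM)
  finally show ?thesis .
qed

lemma final_bound:
  assumes N: "N1 + N2 = N" "2 \<le> N" and kN: "k \<le> N"
  shows "trace_norm k (\<lambda>x y. marginal N k (proj_kernel (vee2 a N1 b N2)) x y - marginal N k (mixed_kernel a N1 b N2 N) x y)
     \<le> ennreal (4 ^ k * (2 * real k * (real k - 1)) / real N)"
proof -
  define r where "r h = ((if ones k h \<le> N1 then real (N - k choose (N1 - ones k h)) else 0) / real (N choose N1)
          - (real N1 / real N) ^ ones k h * (real N2 / real N) ^ (k - ones k h))" for h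
  define D where "D h h' = (if ones k h = ones k h' then complex_of_real (r h) else 0)" for h h'
  have "trace_norm k (\<lambda>x y. marginal N k (proj_kernel (vee2 a N1 b N2)) x y - marginal N k (mixed_kernel a N1 b N2 N) x y)
     \<le> ennreal (\<Sum>h\<in>G k. \<Sum>h'\<in>G k. cmod (D h h'))"
    by (rule trace_norm_bound) (simp only: diff_kernel[OF N kN] D_def r_def)
  also have "\<dots> \<le> ennreal (\<Sum>h\<in>G k. \<Sum>h'\<in>G k. 2 * real k * (real k - 1) / real N)"
  proof (intro ennreal_leI sum_mono)
    fix h h'
    have hk: "ones k h \<le> k" by (rule ones_le)
    have nn: "0 \<le> 2 * real k * (real k - 1) / real N"
      by (cases k) auto
    show "cmod (D h h') \<le> 2 * real k * (real k - 1) / real N"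
    proof (cases "ones k h = ones k h'")
      case True
      then have "cmod (D h h') = \<bar>r h\<bar>" by (simp add: D_def)
      then show ?thesis using coef_bound[OF N kN hk] by (simp add: r_def)
    next
      case False
      then show ?thesis unfolding D_def using nn by simp
    qed
  qed
  also have "(\<Sum>h\<in>G k. \<Sum>h'\<in>G k. 2 * real k * (real k - 1) / real N) = 4 ^ k * (2 * real k * (real k - 1)) / real N"
  proof -
    have "(4::real) ^ k = real (2 ^ k) * real (2 ^ k)" by (simp add: power_mult_distrib[symmetric])
    then show ?thesis by (simp add: card_G)
  qed
  finally show ?thesis .
qed

end


theorem mainTheorem3:
  fixes \<phi>1 \<phi>2 :: "real^3 \<Rightarrow> complex"
    and N1 N2 :: "nat \<Rightarrow> nat"
    and n1 n2 :: real
  assumes L2: "\<phi>1 \<in> L2 (lborel :: (real^3) measure)" "\<phi>2 \<in> L2 (lborel :: (real^3) measure)"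
    and on: "inner_L2 lborel \<phi>1 \<phi>1 = 1" "inner_L2 lborel \<phi>2 \<phi>2 = 1" "inner_L2 lborel \<phi>1 \<phi>2 = 0"
    and sumN: "\<And>N. N \<ge> 2 \<Longrightarrow> N1 N + N2 N = N"
    and lim1: "(\<lambda>N. real (N1 N) / real N) \<longlonglongrightarrow> n1" and n1: "0 < n1" "n1 < 1"
    and lim2: "(\<lambda>N. real (N2 N) / real N) \<longlonglongrightarrow> n2" and n2: "0 < n2" "n2 < 1"
  shows "\<forall>k::nat. \<exists>c::real. c \<ge> 0 \<and> (k = 1 \<longrightarrow> c = 0) \<and>
     (\<forall>N::nat. N \<ge> 2 \<and> N \<ge> k \<longrightarrow>
        trace_norm k (\<lambda>x y.
            marginal N k (proj_kernel (vee2 \<phi>1 (N1 N) \<phi>2 (N2 N))) x y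
          - marginal N k (mixed_kernel \<phi>1 (N1 N) \<phi>2 (N2 N) N) x y)
        \<le> ennreal (c / real N))"
proof -
  interpret two_orth \<phi>1 \<phi>2
    by unfold_locales (use L2 on in auto)
  show ?thesis
  proof
    fix k :: nat
    define c where "c = 4 ^ k * (2 * real k * (real k - 1))"
    have c0: "c \<ge> 0" unfolding c_def by (cases k) auto
    have c1: "k = 1 \<longrightarrow> c = 0" unfolding c_def by simp
    have cN: "\<forall>N::nat. N \<ge> 2 \<and> N \<ge> k \<longrightarrow>
        trace_norm k (\<lambda>x y.
            marginal N k (proj_kernel (vee2 \<phi>1 (N1 N) \<phi>2 (N2 N))) x y
          - marginal N k (mixed_kernel \<phi>1 (N1 N) \<phi>2 (N2 N) N) x y)
        \<le> ennreal (c / real N)"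
    proof (intro allI impI)
      fix N :: nat assume "N \<ge> 2 \<and> N \<ge> k"
      then have N2: "2 \<le> N" and kN: "k \<le> N" by auto
      show "trace_norm k (\<lambda>x y.
            marginal N k (proj_kernel (vee2 \<phi>1 (N1 N) \<phi>2 (N2 N))) x y
          - marginal N k (mixed_kernel \<phi>1 (N1 N) \<phi>2 (N2 N) N) x y)
        \<le> ennreal (c / real N)"
        unfolding c_def by (rule final_bound[OF sumN[OF N2] N2 kN])
    qed
    show "\<exists>c::real. c \<ge> 0 \<and> (k = 1 \<longrightarrow> c = 0) \<and>
     (\<forall>N::nat. N \<ge> 2 \<and> N \<ge> k \<longrightarrow>
        trace_norm k (\<lambda>x y.
            marginal N k (proj_kernel (vee2 \<phi>1 (N1 N) \<phi>2 (N2 N))) x y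
          - marginal N k (mixed_kernel \<phi>1 (N1 N) \<phi>2 (N2 N) N) x y)
        \<le> ennreal (c / real N))"
      using c0 c1 cN by blast
  qed
qed

end
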